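(* Consider the system of three ODEs in the unknowns $(T_0(t),T_2(t),\eta(t))\in\mathbb R^3$: \[ R\dot T_0 = Q\bigl(s_0-\overline{\alpha}_0(\eta)\bigr)-A-BT_0,\qquad R\dot T_2 = Q\bigl(s_2-\overline{\alpha}_2(\eta)\bigr)-(B+6D)T_2,\qquad \dot\eta=\varepsilon\bigl(T_0+T_2\,p_2(\eta)-T_c\bigr), \] with parameter values $Q=343$, $A=202$, $B=1.9$, $\alpha_1=0.32$, $\alpha_2=0.62$, $T_c=-10$, $D=0.35$, any fixed $R>0$, and $\varepsilon>0$. Then, for all sufficiently small $\varepsilon>0$, this system has exactly two equilibrium solutions whose $\eta$-coordinate lies in $[0,1]$, say with $\eta$-coordinates $\eta_1<\eta_2$. The equilibrium with $\eta=\eta_1$ (the larger ice cap) is unstable, and the equilibrium with $\eta=\eta_2$ (the smaller ice cap) is asymptotically stable.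
   Context: $p_0(y)=1$ and $p_2(y)=\tfrac12(3y^2-1)$ are the Legendre polynomials of degree 0 and 2. The insolation distribution is $s(y)=s_0p_0(y)+s_2p_2(y)$ with $s_0=1$, $s_2=-0.477$. Set $q_0(y)=s(y)p_0(y)$, $q_2(y)=s(y)p_2(y)$. For $n=0,1$, define the polynomials in $\eta$ \[ \overline{\alpha}_{2n}(\eta)=\alpha_2 s_{2n}-(4n+1)(\alpha_2-\alpha_1)\int_0^\eta q_{2n}(y)\,dy . \] (These arise from the albedo $\alpha(y,\eta)=\alpha_1$ for $y<\eta$, $\alpha_2$ for $y>\eta$, with $\overline{\alpha}_{2n}(\eta)=(4n+1)\int_0^1\alpha(y,\eta)q_{2n}(y)\,dy$.) The variable $\eta$ (the ice line, $y=\sin(\text{latitude})$) is interpreted so that smaller $\eta$ means a larger ice cap. *)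

theory Defs
  imports "HOL-Analysis.Analysis"
begin

definition p0 :: "real \<Rightarrow> real" where "p0 y = 1"
definition p2 :: "real \<Rightarrow> real" where "p2 y = (3 * y^2 - 1) / 2"

definition s0 :: real where "s0 = 1"
definition s2 :: real where "s2 = -0.477"
definition sfun :: "real \<Rightarrow> real" where "sfun y = s0 * p0 y + s2 * p2 y"

definition q0 :: "real \<Rightarrow> real" where "q0 y = sfun y * p0 y"
definition q2 :: "real \<Rightarrow> real" where "q2 y = sfun y * p2 y"

definition Qc :: real where "Qc = 343"
definition Ac :: real where "Ac = 202"
definition Bc :: real where "Bc = 1.9"
definition alpha1 :: real where "alpha1 = 0.32"
definition alpha2 :: real where "alpha2 = 0.62"
definition Tc :: real where "Tc = -10"
definition Dc :: real where "Dc = 0.35"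

text \<open>Oriented integral from 0 to eta (correct also for eta < 0).\<close>
definition int0 :: "(real \<Rightarrow> real) \<Rightarrow> real \<Rightarrow> real" where
  "int0 q eta = integral {0..eta} q - integral {eta..0} q"

definition alphabar0 :: "real \<Rightarrow> real" where
  "alphabar0 eta = alpha2 * s0 - (alpha2 - alpha1) * int0 q0 eta"
definition alphabar2 :: "real \<Rightarrow> real" where
  "alphabar2 eta = alpha2 * s2 - 5 * (alpha2 - alpha1) * int0 q2 eta"

definition F :: "real \<Rightarrow> real \<Rightarrow> real \<times> real \<times> real \<Rightarrow> real \<times> real \<times> real" where
  "F R eps x = (case x of (T0, T2, eta) \<Rightarrow>
     ((Qc * (s0 - alphabar0 eta) - Ac - Bc * T0) / R,
      (Qc * (s2 - alphabar2 eta) - (Bc + 6 * Dc) * T2) / R,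
      eps * (T0 + T2 * p2 eta - Tc)))"

definition is_solution_on ::
  "(('a::real_normed_vector) \<Rightarrow> 'a) \<Rightarrow> (real \<Rightarrow> 'a) \<Rightarrow> real set \<Rightarrow> bool" where
  "is_solution_on f x I \<longleftrightarrow>
     (\<forall>t\<in>I. (x has_vector_derivative f (x t)) (at t within I))"

definition equilibrium :: "('a::real_normed_vector \<Rightarrow> 'a) \<Rightarrow> 'a \<Rightarrow> bool" where
  "equilibrium f p \<longleftrightarrow> f p = 0"

definition lyap_stable :: "('a::real_normed_vector \<Rightarrow> 'a) \<Rightarrow> 'a \<Rightarrow> bool" where
  "lyap_stable f p \<longleftrightarrow>
     (\<forall>e>0. \<exists>d>0. \<forall>x b. 0 < b \<longrightarrow> is_solution_on f x {0..<b} \<longrightarrow> dist (x 0) p < d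
        \<longrightarrow> (\<forall>t\<in>{0..<b}. dist (x t) p < e))"

definition unstable :: "('a::real_normed_vector \<Rightarrow> 'a) \<Rightarrow> 'a \<Rightarrow> bool" where
  "unstable f p \<longleftrightarrow> \<not> lyap_stable f p"

definition asymp_stable :: "('a::real_normed_vector \<Rightarrow> 'a) \<Rightarrow> 'a \<Rightarrow> bool" where
  "asymp_stable f p \<longleftrightarrow> lyap_stable f p \<and>
     (\<exists>d>0. \<forall>x. is_solution_on f x {0..} \<longrightarrow> dist (x 0) p < d \<longrightarrow> (x \<longlongrightarrow> p) at_top)"

end

theory Submission
  imports Defs
begin


lemma picard_exists:
  fixes G :: "'a::banach \<Rightarrow> 'a"
  assumes L: "L > 0" and lip: "\<And>x y. norm (G x - G y) \<le> L * norm (x - y)" and T: "T > 0"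
  shows "\<exists>x. x 0 = x0 \<and> (\<forall>t\<in>{0..T}. (x has_vector_derivative G (x t)) (at t within {0..T}))"
proof -
  define c where "c t = max 0 (min T t)" for t :: real
  have c_in: "c t \<in> {0..T}" for t using T by (auto simp: c_def)
  have c_id: "t \<in> {0..T} \<Longrightarrow> c t = t" for t by (auto simp: c_def)
  have c_cont: "continuous_on UNIV c" unfolding c_def by (intro continuous_intros)
  have Gcont: "continuous_on UNIV G"
  proof (rule lipschitz_on_continuous_on)
    show "L-lipschitz_on UNIV G" using L lip by (intro lipschitz_onI) (auto simp: dist_norm)
  qed
  define E where "E y s = exp (2 * L * c s) *\<^sub>R apply_bcontfun y s" for y :: "real \<Rightarrow>\<^sub>C 'a" and s
  have E_cont: "continuous_on UNIV (E y)" for y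
    unfolding E_def by (intro continuous_intros continuous_on_compose2[OF _ c_cont]) auto
  have GE_cont: "continuous_on A (\<lambda>s. G (E y s))" for y A
    by (rule continuous_on_subset[OF continuous_on_compose2[OF Gcont E_cont]]) auto
  have GE_int: "(\<lambda>s. G (E y s)) integrable_on {0..u}" for y u
    by (rule integrable_continuous_interval[OF GE_cont])
  define Pf where "Pf y t = exp (-(2 * L * c t)) *\<^sub>R (x0 + integral {0..c t} (\<lambda>s. G (E y s)))" for y t
  have Pf_bc: "Pf y \<in> bcontfun" for y
  proof -
    have ic: "continuous_on {0..T} (\<lambda>u. integral {0..u} (\<lambda>s. G (E y s)))"
      by (rule indefinite_integral_continuous_1[OF GE_int])
    have ic2: "continuous_on UNIV (\<lambda>t. integral {0..c t} (\<lambda>s. G (E y s)))"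
      by (rule continuous_on_compose2[OF ic c_cont]) (use c_in in auto)
    have cont: "continuous_on UNIV (Pf y)"
      unfolding Pf_def by (intro continuous_intros ic2 continuous_on_compose2[OF _ c_cont]) auto
    have "c (c t) = c t" for t using c_id c_in by blast
    then have "Pf y t = Pf y (c t)" for t by (simp add: Pf_def)
    then have "range (Pf y) \<subseteq> Pf y ` {0..T}" using c_in by blast
    moreover have "compact (Pf y ` {0..T})"
      by (rule compact_continuous_image[OF continuous_on_subset[OF cont]]) auto
    ultimately have "bounded (range (Pf y))" by (meson bounded_subset compact_imp_bounded)
    then show ?thesis using cont by (simp add: bcontfun_def)
  qed
  define P where "P y = Bcontfun (Pf y)" for y
  have P_app: "apply_bcontfun (P y) t = Pf y t" for y t
    unfolding P_def using Pf_bc by (simp add: Bcontfun_inverse)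
  have contr: "dist (P y) (P z) \<le> (1/2) * dist y z" for y z
  proof (rule dist_bound)
    fix t
    define \<tau> where "\<tau> = c t"
    have tau: "0 \<le> \<tau>" "\<tau> \<le> T" using c_in by (auto simp: \<tau>_def)
    define Dd where "Dd = dist y z"
    have "norm (integral {0..\<tau>} (\<lambda>s. G (E y s)) - integral {0..\<tau>} (\<lambda>s. G (E z s)))
          = norm (integral {0..\<tau>} (\<lambda>s. G (E y s) - G (E z s)))"
      by (simp add: integral_diff GE_int)
    also have "\<dots> \<le> integral {0..\<tau>} (\<lambda>s. L * exp (2 * L * s) * Dd)"
    proof (rule integral_norm_bound_integral)
      show "(\<lambda>s. G (E y s) - G (E z s)) integrable_on {0..\<tau>}" by (intro integrable_diff GE_int)
      show "(\<lambda>s. L * exp (2 * L * s) * Dd) integrable_on {0..\<tau>}"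
        by (intro integrable_continuous_interval continuous_intros)
      fix s assume s: "s \<in> {0..\<tau>}"
      then have cs: "c s = s" using tau by (intro c_id) auto
      have "norm (G (E y s) - G (E z s)) \<le> L * norm (E y s - E z s)" by (rule lip)
      also have "E y s - E z s = exp (2 * L * s) *\<^sub>R (apply_bcontfun y s - apply_bcontfun z s)"
        by (simp add: E_def cs scaleR_diff_right)
      also have "L * norm \<dots> = L * exp (2 * L * s) * norm (apply_bcontfun y s - apply_bcontfun z s)" by simp
      also have "\<dots> \<le> L * exp (2 * L * s) * Dd"
        using dist_bounded[of y s z] L by (intro mult_left_mono) (auto simp: Dd_def dist_norm)
      finally show "norm (G (E y s) - G (E z s)) \<le> L * exp (2 * L * s) * Dd" .
    qed
    also have "integral {0..\<tau>} (\<lambda>s. L * exp (2 * L * s) * Dd) = Dd * (exp (2 * L * \<tau>) - 1) / 2"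
    proof (rule integral_unique)
      have "((\<lambda>s. L * exp (2 * L * s) * Dd) has_integral ((\<lambda>s. Dd * exp (2 * L * s) / 2) \<tau> - (\<lambda>s. Dd * exp (2 * L * s) / 2) 0)) {0..\<tau>}"
        by (rule fundamental_theorem_of_calculus[OF tau(1)])
           (auto intro!: derivative_eq_intros simp: has_real_derivative_iff_has_vector_derivative[symmetric])
      then show "((\<lambda>s. L * exp (2 * L * s) * Dd) has_integral Dd * (exp (2 * L * \<tau>) - 1) / 2) {0..\<tau>}"
        by (simp add: algebra_simps diff_divide_distrib)
    qed
    finally have I: "norm (integral {0..\<tau>} (\<lambda>s. G (E y s)) - integral {0..\<tau>} (\<lambda>s. G (E z s)))
        \<le> Dd * (exp (2 * L * \<tau>) - 1) / 2" .
    have "dist (apply_bcontfun (P y) t) (apply_bcontfun (P z) t)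
        = exp (-(2 * L * \<tau>)) * norm (integral {0..\<tau>} (\<lambda>s. G (E y s)) - integral {0..\<tau>} (\<lambda>s. G (E z s)))"
      by (simp add: P_app Pf_def \<tau>_def dist_norm scaleR_diff_right[symmetric])
    also have "\<dots> \<le> exp (-(2 * L * \<tau>)) * (Dd * (exp (2 * L * \<tau>) - 1) / 2)"
      by (intro mult_left_mono I) auto
    also have "\<dots> = Dd / 2 - Dd * exp (-(2 * L * \<tau>)) / 2"
      by (simp add: algebra_simps exp_minus field_simps)
    also have "\<dots> \<le> Dd / 2" using zero_le_dist[of y z] by (simp add: Dd_def)
    finally show "dist (apply_bcontfun (P y) t) (apply_bcontfun (P z) t) \<le> 1 / 2 * dist y z"
      by (simp add: Dd_def)
  qed
  obtain y where fxp: "P y = y" using banach_fix_type[of "1/2" P] contr by auto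
  define sol where "sol t = x0 + integral {0..t} (\<lambda>s. G (E y s))" for t
  have sol_E: "sol t = E y t" if "t \<in> {0..T}" for t
  proof -
    have "E y t = exp (2 * L * t) *\<^sub>R apply_bcontfun (P y) t" using fxp that c_id by (simp add: E_def)
    also have "\<dots> = sol t" using that c_id by (simp add: P_app Pf_def sol_def exp_minus)
    finally show ?thesis by simp
  qed
  show ?thesis
  proof (intro exI conjI ballI)
    show "sol 0 = x0" by (simp add: sol_def)
    fix t assume t: "t \<in> {0..T}"
    have "((\<lambda>u. integral {0..u} (\<lambda>s. G (E y s))) has_vector_derivative G (E y t)) (at t within {0..T})"
      by (rule integral_has_vector_derivative[OF GE_cont t])
    then have "(sol has_vector_derivative G (E y t)) (at t within {0..T})"
      unfolding sol_def by (intro derivative_eq_intros) auto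
    then show "(sol has_vector_derivative G (sol t)) (at t within {0..T})" using sol_E[OF t] by simp
  qed
qed


definition P0 :: "real \<Rightarrow> real" where "P0 x = x - 0.477 * (x^3 - x) / 2"
definition P2 :: "real \<Rightarrow> real" where "P2 x = (x^3 - x)/2 - 0.477 * (9 * x^5 / 5 - 2 * x^3 + x) / 4"

lemma int0_ftc:
  assumes der: "\<And>x. (P has_real_derivative q x) (at x)" and P0: "P 0 = 0"
  shows "int0 q e = P e"
proof (cases "0 \<le> e")
  case True
  have "(q has_integral (P e - P 0)) {0..e}"
    by (rule fundamental_theorem_of_calculus[OF True])
       (auto simp: has_real_derivative_iff_has_vector_derivative[symmetric] intro: DERIV_subset[OF der])
  then have "integral {0..e} q = P e" using P0 by (simp add: integral_unique)
  moreover have "integral {e..0} q = 0"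
    using True by (cases "e = 0") auto
  ultimately show ?thesis by (simp add: int0_def)
next
  case False
  have "(q has_integral (P 0 - P e)) {e..0}"
    by (rule fundamental_theorem_of_calculus) (use False in \<open>auto simp: has_real_derivative_iff_has_vector_derivative[symmetric] intro: DERIV_subset[OF der]\<close>)
  then have "integral {e..0} q = - P e" using P0 by (simp add: integral_unique)
  moreover have "integral {0..e} q = 0" using False by simp
  ultimately show ?thesis by (simp add: int0_def)
qed

lemma q0_eq: "q0 x = 1 - 0.477 * (3 * x^2 - 1) / 2"
  by (simp add: q0_def sfun_def p0_def p2_def s0_def s2_def)
lemma q2_eq: "q2 x = (3 * x^2 - 1) / 2 - 0.477 * (9 * x^4 - 6 * x^2 + 1) / 4"
  by (simp add: q2_def sfun_def p0_def p2_def s0_def s2_def field_simps)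

lemma P0_deriv: "(P0 has_real_derivative q0 x) (at x)"
proof -
  have "(P0 has_real_derivative (1 - 0.477 * (3 * x^2 - 1) / 2)) (at x)"
    unfolding P0_def[abs_def] by (rule derivative_eq_intros refl | simp)+
  then show ?thesis by (simp add: q0_eq)
qed

lemma P2_deriv: "(P2 has_real_derivative q2 x) (at x)"
proof -
  have "(P2 has_real_derivative ((3 * x^2 - 1) / 2 - 0.477 * (9 * x^4 - 6 * x^2 + 1) / 4)) (at x)"
    unfolding P2_def[abs_def] by (rule derivative_eq_intros refl | simp)+ (simp add: field_simps)
  then show ?thesis by (simp add: q2_eq)
qed

lemma int0_q0: "int0 q0 e = P0 e"
  by (rule int0_ftc[OF P0_deriv]) (simp add: P0_def)
lemma int0_q2: "int0 q2 e = P2 e"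
  by (rule int0_ftc[OF P2_deriv]) (simp add: P2_def)

definition T0p :: "real \<Rightarrow> real" where "T0p x = (343 * (1 - (0.62 - 0.3 * P0 x)) - 202) / 1.9"
definition T2p :: "real \<Rightarrow> real" where "T2p x = 343 * (-0.477 - (0.62 * (-0.477) - 5 * 0.3 * P2 x)) / 4"
definition hp :: "real \<Rightarrow> real" where "hp x = T0p x + T2p x * p2 x + 10"

lemma F_eq: "R \<noteq> 0 \<Longrightarrow> F R eps (T0, T2, x) =
   (-(1.9/R) * (T0 - T0p x), -(4/R) * (T2 - T2p x), eps * ((T0 - T0p x) + (T2 - T2p x) * p2 x + hp x))"
  by (simp add: F_def alphabar0_def alphabar2_def int0_q0 int0_q2 T0p_def T2p_def hp_def
     Qc_def Ac_def Bc_def alpha1_def alpha2_def Tc_def Dc_def s0_def s2_def field_simps)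

fun hor :: "real list \<Rightarrow> real \<Rightarrow> real" where
  "hor [] x = 0" | "hor (c # cs) x = c + x * hor cs x"

definition hcs :: "real list" where "hcs = [(-151576429/7600000), (129990483/1216000), (-9325827/400000), (-218743791/1216000), (0), (50012487/320000), (0), (-13252491/320000)]"
definition dhcs :: "real list" where "dhcs = [(129990483/1216000), (-9325827/200000), (-656231373/1216000), (0), (50012487/64000), (0), (-92767437/320000)]"

lemma hp_hor: "hp x = hor hcs x"
  by (simp add: hp_def T0p_def T2p_def P0_def P2_def p2_def hcs_def field_simps) (simp add: algebra_simps eval_nat_numeral)


fun ib :: "real list \<Rightarrow> real \<Rightarrow> real \<Rightarrow> real \<times> real" where
  "ib [] a b = (0, 0)"
| "ib (c # cs) a b = (case ib cs a b of (l, u) \<Rightarrow> (c + min (a * l) (b * l), c + max (a * u) (b * u)))"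

lemma ib_correct: "0 \<le> a \<Longrightarrow> a \<le> x \<Longrightarrow> x \<le> b \<Longrightarrow> fst (ib cs a b) \<le> hor cs x \<and> hor cs x \<le> snd (ib cs a b)"
proof (induction cs)
  case Nil then show ?case by simp
next
  case (Cons c cs)
  obtain l u where lu: "ib cs a b = (l, u)" by (cases "ib cs a b")
  with Cons have h: "l \<le> hor cs x" "hor cs x \<le> u" by auto
  have x0: "0 \<le> x" using Cons by simp
  have "x * l \<le> x * hor cs x" using h x0 by (simp add: mult_left_mono)
  moreover have "x * hor cs x \<le> x * u" using h x0 by (simp add: mult_left_mono)
  moreover have "min (a * l) (b * l) \<le> x * l"
  proof (cases "0 \<le> l")
    case True then show ?thesis using Cons by (simp add: min.coboundedI1 mult_right_mono)
  next
    case False then show ?thesis using Cons by (intro min.coboundedI2) (simp add: mult_right_mono_neg)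
  qed
  moreover have "x * u \<le> max (a * u) (b * u)"
  proof (cases "0 \<le> u")
    case True then show ?thesis using Cons by (simp add: max.coboundedI2 mult_right_mono)
  next
    case False then show ?thesis using Cons by (intro max.coboundedI1) (simp add: mult_right_mono_neg)
  qed
  ultimately show ?case using lu by simp
qed

fun chain :: "real list \<Rightarrow> real list \<Rightarrow> bool" where
  "chain cs (a # b # rest) = (a \<le> b \<and> 0 < fst (ib cs a b) \<and> chain cs (b # rest))"
| "chain cs _ = True"

lemma chain_correct: "chain cs (a # b # rest) \<Longrightarrow> 0 \<le> a \<Longrightarrow> a \<le> x \<Longrightarrow> x \<le> last (b # rest) \<Longrightarrow> 0 < hor cs x"
proof (induction rest arbitrary: a b)
  case Nil then show ?case using ib_correct[of a x b cs] by auto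
next
  case (Cons c rest)
  show ?case
  proof (cases "x \<le> b")
    case True then show ?thesis using ib_correct[of a x b cs] Cons.prems by auto
  next
    case False
    have "0 \<le> b" using False Cons.prems by auto
    then show ?thesis using Cons.IH[of b c] Cons.prems False by auto
  qed
qed

definition c1L :: "real list" where "c1L = [5333121477832425340928000000, -44664389862099517440000000, 15220566349798440960000, 183495591513292800000, 0, -389217178828800, 0, 251797329]"
lemma c1_id: "hor c1L y = 267401227875123200000000000 * (-1 * hor hcs (y/640) + (0))"
  by (simp add: c1L_def hcs_def field_simps)
lemma c1_chain: "chain c1L [0, 96]"
  by (simp add: c1L_def)

definition c2L :: "real list" where "c2L = [-5333121477832425340928000000, 44664389862099517440000000, -15220566349798440960000, -183495591513292800000, 0, 389217178828800, 0, -251797329]"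
lemma c2_id: "hor c2L y = 267401227875123200000000000 * (1 * hor hcs (y/640) + (0))"
  by (simp add: c2L_def hcs_def field_simps)
lemma c2_chain: "chain c2L [192, 264, 336, 372, 408, 426, 444, 462, 471, 480]"
  by (simp add: c2L_def)

definition c3L :: "real list" where "c3L = [5333121477832425340928000000, -44664389862099517440000000, 15220566349798440960000, 183495591513292800000, 0, -389217178828800, 0, 251797329]"
lemma c3_id: "hor c3L y = 267401227875123200000000000 * (-1 * hor hcs (y/640) + (0))"
  by (simp add: c3L_def hcs_def field_simps)
lemma c3_chain: "chain c3L [576, 580, 584, 588, 592, 596, 600, 604, 608, 612, 616, 620, 624, 628, 632, 634, 636, 638, 640]"
  by (simp add: c3L_def)

definition c4L :: "real list" where "c4L = [40486245676550717440000000, -30441132699596881920000, -550486774539878400000, 0, 1946085894144000, 0, -1762581303]"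
lemma c4_id: "hor c4L y = 417814418554880000000000 * (1 * hor dhcs (y/640) + (-10))"
  by (simp add: c4L_def dhcs_def field_simps)
lemma c4_chain: "chain c4L [96, 192]"
  by (simp add: c4L_def)

definition c5L :: "real list" where "c5L = [-2882948006611517440000000, 30441132699596881920000, 550486774539878400000, 0, -1946085894144000, 0, 1762581303]"
lemma c5_id: "hor c5L y = 417814418554880000000000 * (-1 * hor dhcs (y/640) + (100))"
  by (simp add: c5L_def dhcs_def field_simps)
lemma c5_chain: "chain c5L [96, 192]"
  by (simp add: c5L_def)

definition c6L :: "real list" where "c6L = [-48842534047648317440000000, 30441132699596881920000, 550486774539878400000, 0, -1946085894144000, 0, 1762581303]"
lemma c6_id: "hor c6L y = 417814418554880000000000 * (-1 * hor dhcs (y/640) + (-10))"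
  by (simp add: c6L_def dhcs_def field_simps)
lemma c6_chain: "chain c6L [480, 504, 528, 540, 552, 558, 564, 570, 573, 576]"
  by (simp add: c6L_def)

definition c7L :: "real list" where "c7L = [86445831717587517440000000, -30441132699596881920000, -550486774539878400000, 0, 1946085894144000, 0, -1762581303]"
lemma c7_id: "hor c7L y = 417814418554880000000000 * (1 * hor dhcs (y/640) + (100))"
  by (simp add: c7L_def dhcs_def field_simps)
lemma c7_chain: "chain c7L [480, 528, 576]"
  by (simp add: c7L_def)

definition hL :: "real list" where "hL = [-5333121477832425340928000000, 44664389862099517440000000, -15220566349798440960000, -183495591513292800000, 0, 389217178828800, 0, -251797329]"
lemma hL_id: "hor hL y = 267401227875123200000000000 * hor hcs (y/640)"
  by (simp add: hL_def hcs_def field_simps)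

lemma hL_128: "hor hL 128 < 0" by (simp add: hL_def)

lemma hL_160: "hor hL 160 > 0" by (simp add: hL_def)

lemma hL_512: "hor hL 512 > 0" by (simp add: hL_def)

lemma hL_544: "hor hL 544 < 0" by (simp add: hL_def)


lemma core_ineq:
  fixes z u v H p a0 a2 \<beta> \<beta>' \<epsilon> c S M K :: real
  assumes zH: "z * H \<le> - c * z^2" and H: "\<bar>H\<bar> \<le> M * \<bar>z\<bar>"
    and a0: "\<bar>a0\<bar> \<le> S" and a2: "\<bar>a2\<bar> \<le> S" and p: "\<bar>p\<bar> \<le> 1"
    and c: "c > 0" and S: "S \<ge> 0" and M: "M \<ge> 0" and \<beta>: "\<beta> > 0" and \<beta>': "\<beta>' \<ge> \<beta>"
    and e: "\<epsilon> > 0" and K: "K = (1 + S * M)^2 / (2 * c) + S"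
    and eK: "\<epsilon> * K \<le> \<beta> / 4" and ec: "\<epsilon> * c \<le> \<beta>"
  shows "\<epsilon> * z * (u + v * p + H) - \<beta> * u^2 - \<beta>' * v^2 - \<epsilon> * (u + v * p + H) * (a0 * u + a2 * v)
         \<le> -(\<epsilon>*c/2) * (z^2 + u^2 + v^2)"
proof -
  define r where "r = \<bar>u\<bar> + \<bar>v\<bar>"
  define w where "w = u + v * p + H"
  have r0: "r \<ge> 0" by (simp add: r_def)
  have s1: "z * (u + v * p) \<le> \<bar>z\<bar> * r"
  proof -
    have "z * (u + v * p) \<le> \<bar>z * (u + v * p)\<bar>" by simp
    also have "\<dots> = \<bar>z\<bar> * \<bar>u + v * p\<bar>" by (simp add: abs_mult)
    also have "\<bar>u + v * p\<bar> \<le> \<bar>u\<bar> + \<bar>v\<bar> * \<bar>p\<bar>" using abs_triangle_ineq[of u "v * p"] by (simp add: abs_mult)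
    also have "\<dots> \<le> r" using p by (simp add: r_def mult_left_le)
    finally show ?thesis by (simp add: mult_left_mono)
  qed
  have wb: "\<bar>w\<bar> \<le> r + M * \<bar>z\<bar>"
  proof -
    have "\<bar>w\<bar> \<le> \<bar>u\<bar> + \<bar>v\<bar> * \<bar>p\<bar> + \<bar>H\<bar>" unfolding w_def
      using abs_triangle_ineq[of "u + v * p" H] abs_triangle_ineq[of u "v * p"] by (simp add: abs_mult)
    also have "\<bar>v\<bar> * \<bar>p\<bar> \<le> \<bar>v\<bar>" using p by (simp add: mult_left_le)
    finally show ?thesis using H by (simp add: r_def)
  qed
  have ab: "\<bar>a0 * u + a2 * v\<bar> \<le> S * r"
  proof -
    have "\<bar>a0 * u + a2 * v\<bar> \<le> \<bar>a0\<bar>*\<bar>u\<bar> + \<bar>a2\<bar>*\<bar>v\<bar>" using abs_triangle_ineq[of "a0 * u" "a2 * v"] by (simp add: abs_mult)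
    also have "\<dots> \<le> S*\<bar>u\<bar> + S*\<bar>v\<bar>" using a0 a2 by (intro add_mono mult_right_mono) auto
    finally show ?thesis by (simp add: r_def algebra_simps)
  qed
  have s2: "- (w * (a0 * u + a2 * v)) \<le> S * r * (r + M * \<bar>z\<bar>)"
  proof -
    have "- (w * (a0 * u + a2 * v)) \<le> \<bar>w\<bar> * \<bar>a0 * u + a2 * v\<bar>" by (simp add: abs_mult[symmetric])
    also have "\<dots> \<le> (r + M * \<bar>z\<bar>) * (S * r)" using wb ab by (intro mult_mono) auto
    finally show ?thesis by (simp add: algebra_simps)
  qed
  define A where "A = 1 + S * M"
  have A0: "A \<ge> 1" using S M by (simp add: A_def)
  have s3: "A * \<bar>z\<bar> * r \<le> (c/2) * z^2 + A^2/(2 * c) * r^2"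
  proof -
    have "0 \<le> (c * \<bar>z\<bar> - A * r)^2" by simp
    then have "2 * c * (A * \<bar>z\<bar> * r) \<le> c^2 * z^2 + A^2 * r^2"
      by (simp add: power2_eq_square algebra_simps)
    then have "A * \<bar>z\<bar> * r \<le> (c^2 * z^2 + A^2 * r^2) / (2 * c)" using c by (simp add: field_simps)
    also have "\<dots> = (c/2) * z^2 + A^2/(2 * c) * r^2" using c by (simp add: field_simps power2_eq_square)
    finally show ?thesis .
  qed
  have s4: "r^2 \<le> 2 * (u^2 + v^2)"
  proof -
    have "0 \<le> (\<bar>u\<bar> - \<bar>v\<bar>)^2" by simp
    then show ?thesis by (simp add: r_def power2_eq_square algebra_simps)
  qed
  have "\<epsilon> * z * w - \<beta> * u^2 - \<beta>' * v^2 - \<epsilon> * w * (a0 * u + a2 * v)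
      = \<epsilon> * (z * H + z * (u + v * p) - w * (a0 * u + a2 * v)) - \<beta> * u^2 - \<beta>' * v^2"
    by (simp add: w_def algebra_simps)
  also have "\<dots> \<le> \<epsilon> * (- c * z^2 + \<bar>z\<bar> * r + S * r * (r + M * \<bar>z\<bar>)) - \<beta> * u^2 - \<beta> * v^2"
  proof -
    have "z * H + z * (u + v * p) - w * (a0 * u + a2 * v) \<le> - c * z^2 + \<bar>z\<bar> * r + S * r * (r + M * \<bar>z\<bar>)"
      using zH s1 s2 by linarith
    moreover have "\<beta>' * v^2 \<ge> \<beta> * v^2" using \<beta>' by (simp add: mult_right_mono)
    ultimately show ?thesis using e by (smt (verit) mult_left_mono)
  qed
  also have "- c * z^2 + \<bar>z\<bar> * r + S * r * (r + M * \<bar>z\<bar>) = - c * z^2 + A * \<bar>z\<bar> * r + S * r^2"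
    by (simp add: A_def power2_eq_square algebra_simps)
  also have "\<epsilon> * (- c * z^2 + A * \<bar>z\<bar> * r + S * r^2) \<le> \<epsilon> * (- (c/2) * z^2 + K * r^2)"
  proof -
    have Keq: "K * r^2 = A^2/(2 * c) * r^2 + S * r^2" by (simp add: K A_def distrib_right)
    have "- c * z^2 + A * \<bar>z\<bar> * r + S * r^2 \<le> - (c/2) * z^2 + K * r^2" using s3 Keq by linarith
    then show ?thesis using e by (intro mult_left_mono) auto
  qed
  also have "\<epsilon> * (- (c/2) * z^2 + K * r^2) \<le> \<epsilon> * (- (c/2) * z^2) + \<epsilon> * K * (2 * (u^2 + v^2))"
  proof -
    have "K \<ge> 0" using K c S by (simp add: K)
    then have "K * r^2 \<le> K * (2 * (u^2+v^2))" using s4 by (simp add: mult_left_mono)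
    then have "\<epsilon> * (K * r^2) \<le> \<epsilon> * (K * (2 * (u^2+v^2)))" by (rule mult_left_mono[OF _ less_imp_le[OF e]])
    then show ?thesis by (simp add: algebra_simps)
  qed
  finally have "\<epsilon> * z * w - \<beta> * u^2 - \<beta>' * v^2 - \<epsilon> * w * (a0 * u + a2 * v)
     \<le> \<epsilon> * (- (c/2) * z^2) + \<epsilon> * K * (2 * (u^2 + v^2)) - \<beta> * u^2 - \<beta> * v^2" by simp
  also have "\<dots> \<le> \<epsilon> * (- (c/2) * z^2) - (\<beta>/2) * (u^2 + v^2)"
  proof -
    have "\<epsilon> * K * (2 * (u^2 + v^2)) \<le> (\<beta>/4) * (2 * (u^2 + v^2))" using eK by (intro mult_right_mono) auto
    then show ?thesis by (simp add: algebra_simps)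
  qed
  also have "\<dots> \<le> -(\<epsilon>*c/2) * (z^2 + u^2 + v^2)"
  proof -
    have "(\<epsilon>*c/2) * (u^2 + v^2) \<le> (\<beta>/2) * (u^2+v^2)" using ec by (intro mult_right_mono) auto
    then show ?thesis by (simp add: algebra_simps)
  qed
  finally show ?thesis by (simp add: w_def)
qed


fun ladd :: "real list \<Rightarrow> real list \<Rightarrow> real list" where
  "ladd [] ys = ys" | "ladd xs [] = xs" | "ladd (x#xs) (y#ys) = (x+y) # ladd xs ys"
lemma hor_ladd: "hor (ladd xs ys) x = hor xs x + hor ys x"
  by (induction xs ys rule: ladd.induct) (auto simp: algebra_simps)
fun pd :: "real list \<Rightarrow> real list" where
  "pd [] = []" | "pd (c#cs) = ladd cs (0 # pd cs)"
lemma hor_deriv: "(hor cs has_real_derivative hor (pd cs) x) (at x)"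
proof (induction cs)
  case Nil then show ?case by simp
next
  case (Cons c cs)
  have "((\<lambda>x. c + x * hor cs x) has_real_derivative (hor cs x + x * hor (pd cs) x)) (at x)"
    by (rule derivative_eq_intros Cons refl | simp)+
  then show ?case by (simp add: hor_ladd)
qed
lemma pd_hcs: "hor (pd hcs) x = hor dhcs x"
  by (simp add: hcs_def dhcs_def)
lemma hp_deriv: "(hp has_real_derivative hor dhcs x) (at x)"
proof -
  have "hp = hor hcs" using hp_hor by auto
  then show ?thesis using hor_deriv[of hcs x] pd_hcs by simp
qed

definition dT0p :: "real \<Rightarrow> real" where "dT0p x = 343 * 0.3 * q0 x / 1.9"
definition dT2p :: "real \<Rightarrow> real" where "dT2p x = 343 * (5 * 0.3) * q2 x / 4"
lemma T0p_deriv: "(T0p has_real_derivative dT0p x) (at x)"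
  unfolding T0p_def[abs_def] dT0p_def by (rule derivative_eq_intros P0_deriv refl | simp)+
lemma T2p_deriv: "(T2p has_real_derivative dT2p x) (at x)"
  unfolding T2p_def[abs_def] dT2p_def by (rule derivative_eq_intros P2_deriv refl | simp)+

lemma sq01: "0 \<le> x \<Longrightarrow> x \<le> (1::real) \<Longrightarrow> 0 \<le> x^2 \<and> x^2 \<le> 1 \<and> x^4 \<le> 1"
  by (simp add: power_le_one)
lemma q0_bnd: "0 \<le> x \<Longrightarrow> x \<le> 1 \<Longrightarrow> \<bar>q0 x\<bar> \<le> 2"
  using sq01[of x] by (simp add: q0_eq abs_le_iff)
lemma q2_bnd: "0 \<le> x \<Longrightarrow> x \<le> 1 \<Longrightarrow> \<bar>q2 x\<bar> \<le> 3"
proof -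
  assume x: "0 \<le> x" "x \<le> 1"
  have x4: "0 \<le> x^4" "0 \<le> x^2" by simp_all
  have A: "x^2 \<le> 1" "x^4 \<le> 1" using sq01[OF x] by auto
  show ?thesis using A by (simp add: q2_eq abs_le_iff field_simps; insert x4; linarith)
qed
lemma dT0p_bnd: "0 \<le> x \<Longrightarrow> x \<le> 1 \<Longrightarrow> \<bar>dT0p x\<bar> \<le> 600"
  using q0_bnd[of x] by (simp add: dT0p_def abs_mult)
lemma dT2p_bnd: "0 \<le> x \<Longrightarrow> x \<le> 1 \<Longrightarrow> \<bar>dT2p x\<bar> \<le> 600"
  using q2_bnd[of x] by (simp add: dT2p_def abs_mult)
lemma p2_bnd: "0 \<le> x \<Longrightarrow> x \<le> 1 \<Longrightarrow> \<bar>p2 x\<bar> \<le> 1"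
proof -
  assume x: "0 \<le> x" "x \<le> 1"
  have x4: "0 \<le> x^2" by simp_all
  have A: "x^2 \<le> 1" using sq01[OF x] by auto
  show ?thesis using A x4 by (auto simp: p2_def abs_le_iff field_simps)
qed

lemma lip_mvt:
  fixes f f' :: "real \<Rightarrow> real"
  assumes der: "\<And>x. lo \<le> x \<Longrightarrow> x \<le> hi \<Longrightarrow> (f has_real_derivative f' x) (at x)"
    and bnd: "\<And>x. lo \<le> x \<Longrightarrow> x \<le> hi \<Longrightarrow> \<bar>f' x\<bar> \<le> K"
    and a: "lo \<le> a" "a \<le> hi" and b: "lo \<le> b" "b \<le> hi"
  shows "\<bar>f a - f b\<bar> \<le> K * \<bar>a - b\<bar>"
proof -
  have main: "\<bar>f y - f x\<bar> \<le> K * \<bar>y - x\<bar>" if "lo \<le> x" "x < y" "y \<le> hi" for x y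
  proof -
    have "\<exists>z>x. z < y \<and> f y - f x = (y - x) * f' z"
      by (rule MVT2) (use that der in auto)
    then obtain z where z: "x < z" "z < y" "f y - f x = (y - x) * f' z" by blast
    have "\<bar>f y - f x\<bar> = \<bar>y - x\<bar> * \<bar>f' z\<bar>" using z by (simp add: abs_mult)
    also have "\<dots> \<le> \<bar>y - x\<bar> * K" using bnd[of z] z that by (intro mult_left_mono) auto
    finally show ?thesis by (simp add: mult.commute)
  qed
  consider "a < b" | "a = b" | "b < a" by linarith
  then show ?thesis
  proof cases
    case 1 then show ?thesis using main[of a b] a b by (simp add: abs_minus_commute)
  next
    case 3 then show ?thesis using main[of b a] a b by (simp add: abs_minus_commute)
  qed simp
qed

lemma T0p_lip: "0 \<le> a \<Longrightarrow> a \<le> 1 \<Longrightarrow> 0 \<le> b \<Longrightarrow> b \<le> 1 \<Longrightarrow> \<bar>T0p a - T0p b\<bar> \<le> 600 * \<bar>a - b\<bar>"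
  by (rule lip_mvt[OF T0p_deriv dT0p_bnd])
lemma T2p_lip: "0 \<le> a \<Longrightarrow> a \<le> 1 \<Longrightarrow> 0 \<le> b \<Longrightarrow> b \<le> 1 \<Longrightarrow> \<bar>T2p a - T2p b\<bar> \<le> 600 * \<bar>a - b\<bar>"
  by (rule lip_mvt[OF T2p_deriv dT2p_bnd])
lemma p2_lip: "0 \<le> a \<Longrightarrow> a \<le> 1 \<Longrightarrow> 0 \<le> b \<Longrightarrow> b \<le> 1 \<Longrightarrow> \<bar>p2 a - p2 b\<bar> \<le> 3 * \<bar>a - b\<bar>"
proof -
  assume ab: "0 \<le> a" "a \<le> 1" "0 \<le> b" "b \<le> 1"
  have e: "p2 a - p2 b = 3/2 * (a + b) * (a - b)" by (simp add: p2_def power2_eq_square field_simps)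
  have "\<bar>p2 a - p2 b\<bar> = 3/2 * \<bar>a + b\<bar> * \<bar>a - b\<bar>" unfolding e abs_mult by simp
  also have "\<dots> \<le> 3/2 * 2 * \<bar>a - b\<bar>" using ab by (intro mult_right_mono) auto
  finally show ?thesis by simp
qed
lemma T2p_bnd: "0 \<le> a \<Longrightarrow> a \<le> 1 \<Longrightarrow> \<bar>T2p a\<bar> \<le> 700"
proof -
  assume a: "0 \<le> a" "a \<le> 1"
  have "\<bar>T2p a - T2p 0\<bar> \<le> 600 * \<bar>a - 0\<bar>" using T2p_lip[of a 0] a by simp
  moreover have "T2p 0 = 343 * (-0.477 - (0.62 * (-0.477))) / 4" by (simp add: T2p_def P2_def)
  ultimately show ?thesis using a by (simp add: abs_le_iff)
qed


lemma hp_neg1: "0 \<le> x \<Longrightarrow> x \<le> 3/20 \<Longrightarrow> hp x < 0"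
  using chain_correct[OF c1_chain, of "640 * x"] c1_id[of "640 * x"] by (simp add: hp_hor)
lemma hp_pos: "3/10 \<le> x \<Longrightarrow> x \<le> 3/4 \<Longrightarrow> hp x > 0"
  using chain_correct[OF c2_chain, of "640 * x"] c2_id[of "640 * x"] by (simp add: hp_hor)
lemma hp_neg2: "9/10 \<le> x \<Longrightarrow> x \<le> 1 \<Longrightarrow> hp x < 0"
  using chain_correct[OF c3_chain, of "640 * x"] c3_id[of "640 * x"] by (simp add: hp_hor)
lemma dh1: "3/20 \<le> x \<Longrightarrow> x \<le> 3/10 \<Longrightarrow> 10 < hor dhcs x \<and> hor dhcs x < 100"
  using chain_correct[OF c4_chain, of "640 * x"] c4_id[of "640 * x"]
    chain_correct[OF c5_chain, of "640 * x"] c5_id[of "640 * x"] by simp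
lemma dh2: "3/4 \<le> x \<Longrightarrow> x \<le> 9/10 \<Longrightarrow> -100 < hor dhcs x \<and> hor dhcs x < -10"
  using chain_correct[OF c6_chain, of "640 * x"] c6_id[of "640 * x"]
    chain_correct[OF c7_chain, of "640 * x"] c7_id[of "640 * x"] by simp
lemma hp_vals: "hp (1/5) < 0" "hp (1/4) > 0" "hp (4/5) > 0" "hp (17/20) < 0"
  using hL_128 hL_160 hL_512 hL_544 hL_id[of 128] hL_id[of 160] hL_id[of 512] hL_id[of 544]
  by (simp_all add: hp_hor)

lemma hp_cont: "continuous_on A hp"
  using hp_deriv by (meson DERIV_isCont continuous_at_imp_continuous_on)

lemma mvt_ex:
  fixes f f' :: "real \<Rightarrow> real"
  assumes der: "\<And>x. lo \<le> x \<Longrightarrow> x \<le> hi \<Longrightarrow> (f has_real_derivative f' x) (at x)"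
    and a: "lo \<le> a" "a \<le> hi" and b: "lo \<le> b" "b \<le> hi"
  shows "\<exists>\<xi>. lo \<le> \<xi> \<and> \<xi> \<le> hi \<and> f a - f b = (a - b) * f' \<xi>"
proof -
  consider "a < b" | "a = b" | "b < a" by linarith
  then show ?thesis
  proof cases
    case 1
    have "\<exists>z>a. z < b \<and> f b - f a = (b - a) * f' z" by (rule MVT2) (use 1 der a b in auto)
    then obtain z where "a < z" "z < b" "f b - f a = (b - a) * f' z" by blast
    then show ?thesis using a b by (intro exI[of _ z]) (auto simp: algebra_simps)
  next
    case 3
    have "\<exists>z>b. z < a \<and> f a - f b = (a - b) * f' z" by (rule MVT2) (use 3 der a b in auto)
    then obtain z where "b < z" "z < a" "f a - f b = (a - b) * f' z" by blast
    then show ?thesis using a b by (intro exI[of _ z]) (auto simp: algebra_simps)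
  next
    case 2 then show ?thesis using a by (intro exI[of _ a]) auto
  qed
qed

lemma root1: "\<exists>e. 1/5 \<le> e \<and> e \<le> 1/4 \<and> hp e = 0"
  by (rule IVT') (use hp_vals(1,2) hp_cont in auto)
lemma root2: "\<exists>e. 4/5 \<le> e \<and> e \<le> 17/20 \<and> hp e = 0"
  by (rule IVT2') (use hp_vals(3,4) hp_cont in auto)

lemma hp_mono1: assumes "3/20 \<le> a" "a < b" "b \<le> 3/10" shows "hp a < hp b"
proof (rule DERIV_pos_imp_increasing[OF assms(2)])
  fix x assume "a \<le> x" "x \<le> b"
  then show "\<exists>y. DERIV hp x :> y \<and> y > 0" using hp_deriv[of x] dh1[of x] assms by auto
qed
lemma hp_mono2: assumes "3/4 \<le> a" "a < b" "b \<le> 9/10" shows "hp a > hp b"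
proof (rule DERIV_neg_imp_decreasing[OF assms(2)])
  fix x assume "a \<le> x" "x \<le> b"
  then show "\<exists>y. DERIV hp x :> y \<and> y < 0" using hp_deriv[of x] dh2[of x] assms by auto
qed

lemma roots_unique:
  assumes e1: "1/5 \<le> e1" "e1 \<le> 1/4" "hp e1 = 0" and e2: "4/5 \<le> e2" "e2 \<le> 17/20" "hp e2 = 0"
    and x: "0 \<le> x" "x \<le> 1" "hp x = 0"
  shows "x = e1 \<or> x = e2"
proof -
  have "x \<notin> {0..3/20}" using hp_neg1 x by fastforce
  moreover have "x \<notin> {3/10..3/4}" using hp_pos x by fastforce
  moreover have "x \<notin> {9/10..1}" using hp_neg2 x by fastforce
  moreover have "x = e1" if "3/20 < x" "x < 3/10"
    using hp_mono1[of x e1] hp_mono1[of e1 x] that e1 x by (cases "x < e1"; cases "e1 < x") auto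
  moreover have "x = e2" if "3/4 < x" "x < 9/10"
    using hp_mono2[of x e2] hp_mono2[of e2 x] that e2 x by (cases "x < e2"; cases "e2 < x") auto
  ultimately show ?thesis using x by force
qed

lemma local1:
  assumes e: "1/5 \<le> e" "e \<le> 1/4" "hp e = 0" and x: "\<bar>x - e\<bar> \<le> 1/20"
  shows "(x - e) * hp x \<ge> 10 * (x - e)^2 \<and> \<bar>hp x\<bar> \<le> 100 * \<bar>x - e\<bar>"
proof -
  have xr: "3/20 \<le> x" "x \<le> 3/10" using e x unfolding abs_le_iff by linarith+
  have "\<exists>\<xi>. 3/20 \<le> \<xi> \<and> \<xi> \<le> 3/10 \<and> hp x - hp e = (x - e) * hor dhcs \<xi>"
    by (rule mvt_ex) (use hp_deriv xr e in auto)
  then obtain \<xi> where xi: "3/20 \<le> \<xi>" "\<xi> \<le> 3/10" "hp x - hp e = (x - e) * hor dhcs \<xi>" by blast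
  have d: "10 < hor dhcs \<xi>" "hor dhcs \<xi> < 100" using dh1 xi by auto
  have "(x - e) * hp x = (x - e)^2 * hor dhcs \<xi>" using xi e by (simp add: power2_eq_square)
  moreover have "(x-e)^2 * 10 \<le> (x - e)^2 * hor dhcs \<xi>" using d by (intro mult_left_mono) auto
  moreover have "\<bar>hp x\<bar> = \<bar>x - e\<bar> * \<bar>hor dhcs \<xi>\<bar>" using xi e by (simp add: abs_mult)
  moreover have "\<bar>x - e\<bar> * \<bar>hor dhcs \<xi>\<bar> \<le> \<bar>x - e\<bar> * 100" using d by (intro mult_left_mono) auto
  ultimately show ?thesis by (simp add: mult.commute)
qed

lemma local2:
  assumes e: "4/5 \<le> e" "e \<le> 17/20" "hp e = 0" and x: "\<bar>x - e\<bar> \<le> 1/20"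
  shows "(x - e) * hp x \<le> - 10 * (x - e)^2 \<and> \<bar>hp x\<bar> \<le> 100 * \<bar>x - e\<bar>"
proof -
  have xr: "3/4 \<le> x" "x \<le> 9/10" using e x unfolding abs_le_iff by linarith+
  have "\<exists>\<xi>. 3/4 \<le> \<xi> \<and> \<xi> \<le> 9/10 \<and> hp x - hp e = (x - e) * hor dhcs \<xi>"
    by (rule mvt_ex) (use hp_deriv xr e in auto)
  then obtain \<xi> where xi: "3/4 \<le> \<xi>" "\<xi> \<le> 9/10" "hp x - hp e = (x - e) * hor dhcs \<xi>" by blast
  have d: "-100 < hor dhcs \<xi>" "hor dhcs \<xi> < -10" using dh2 xi by auto
  have "(x - e) * hp x = (x - e)^2 * hor dhcs \<xi>" using xi e by (simp add: power2_eq_square)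
  moreover have "(x-e)^2 * hor dhcs \<xi> \<le> (x - e)^2 * (-10)" using d by (intro mult_left_mono) auto
  moreover have "\<bar>hp x\<bar> = \<bar>x - e\<bar> * \<bar>hor dhcs \<xi>\<bar>" using xi e by (simp add: abs_mult)
  moreover have "\<bar>x - e\<bar> * \<bar>hor dhcs \<xi>\<bar> \<le> \<bar>x - e\<bar> * 100" using d by (intro mult_left_mono) auto
  ultimately show ?thesis by (simp add: mult.commute)
qed


definition uu :: "real \<times> real \<times> real \<Rightarrow> real" where "uu X = fst X - T0p (snd (snd X))"
definition vv :: "real \<times> real \<times> real \<Rightarrow> real" where "vv X = fst (snd X) - T2p (snd (snd X))"
definition zz :: "real \<Rightarrow> real \<times> real \<times> real \<Rightarrow> real" where "zz e X = snd (snd X) - e"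
definition ww :: "real \<times> real \<times> real \<Rightarrow> real" where "ww X = uu X + vv X * p2 (snd (snd X)) + hp (snd (snd X))"
definition Vf where "Vf e X = (zz e X)^2 + (uu X)^2 + (vv X)^2"
definition Wf where "Wf e X = (zz e X)^2 - (uu X)^2 - (vv X)^2"
definition DV where "DV R eps e X = 2 * (eps * zz e X * ww X - (1.9/R) * (uu X)^2 - (4/R) * (vv X)^2
    - eps * ww X * (dT0p (snd (snd X)) * uu X + dT2p (snd (snd X)) * vv X))"
definition DW where "DW R eps e X = 2 * (eps * zz e X * ww X + (1.9/R) * (uu X)^2 + (4/R) * (vv X)^2
    + eps * ww X * (dT0p (snd (snd X)) * uu X + dT2p (snd (snd X)) * vv X))"

lemma vd_fst:
  assumes "(X has_vector_derivative D) FF"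
  shows "((\<lambda>s. fst (X s)) has_real_derivative fst D) FF"
proof -
  have "(X has_derivative (\<lambda>h. h *\<^sub>R D)) FF" using assms by (simp add: has_vector_derivative_def)
  from has_derivative_fst[OF this] have "((\<lambda>s. fst (X s)) has_derivative (\<lambda>h. h *\<^sub>R fst D)) FF" by simp
  then show ?thesis by (simp add: has_real_derivative_iff_has_vector_derivative has_vector_derivative_def)
qed
lemma vd_snd:
  assumes "(X has_vector_derivative D) FF"
  shows "((\<lambda>s. snd (X s)) has_vector_derivative snd D) FF"
proof -
  have "(X has_derivative (\<lambda>h. h *\<^sub>R D)) FF" using assms by (simp add: has_vector_derivative_def)
  from has_derivative_snd[OF this] have "((\<lambda>s. snd (X s)) has_derivative (\<lambda>h. h *\<^sub>R snd D)) FF" by simp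
  then show ?thesis by (simp add: has_vector_derivative_def)
qed

lemma comp_derivs:
  fixes X :: "real \<Rightarrow> real \<times> real \<times> real"
  assumes R: "R \<noteq> 0" and d: "(X has_vector_derivative F R eps (X t)) (at t within I)"
  shows "((\<lambda>s. Vf e (X s)) has_real_derivative DV R eps e (X t)) (at t within I)"
    and "((\<lambda>s. Wf e (X s)) has_real_derivative DW R eps e (X t)) (at t within I)"
proof -
  obtain a b c where Xt: "X t = (a, b, c)" by (cases "X t") auto
  define D where "D = F R eps (X t)"
  have D: "D = (-(1.9/R) * (a - T0p c), -(4/R) * (b - T2p c), eps * ((a - T0p c) + (b - T2p c) * p2 c + hp c))"
    unfolding D_def Xt by (rule F_eq[OF R])
  have hA: "((\<lambda>s. fst (X s)) has_real_derivative fst D) (at t within I)" using vd_fst d D_def by simp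
  have d2: "((\<lambda>s. snd (X s)) has_vector_derivative snd D) (at t within I)" using vd_snd d D_def by simp
  have hB: "((\<lambda>s. fst (snd (X s))) has_real_derivative fst (snd D)) (at t within I)" using vd_fst[OF d2] .
  have hC: "((\<lambda>s. snd (snd (X s))) has_real_derivative snd (snd D)) (at t within I)"
    using vd_snd[OF d2] by (simp add: has_real_derivative_iff_has_vector_derivative)
  have hT0: "((\<lambda>s. T0p (snd (snd (X s)))) has_real_derivative dT0p c * snd (snd D)) (at t within I)"
    using DERIV_chain2[OF T0p_deriv hC] Xt by simp
  have hT2: "((\<lambda>s. T2p (snd (snd (X s)))) has_real_derivative dT2p c * snd (snd D)) (at t within I)"
    using DERIV_chain2[OF T2p_deriv hC] Xt by simp
  have V: "(\<lambda>s. Vf e (X s)) = (\<lambda>s. (snd (snd (X s)) - e)^2 + (fst (X s) - T0p (snd (snd (X s))))^2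
      + (fst (snd (X s)) - T2p (snd (snd (X s))))^2)"
    by (simp add: Vf_def zz_def uu_def vv_def)
  have W: "(\<lambda>s. Wf e (X s)) = (\<lambda>s. (snd (snd (X s)) - e)^2 - (fst (X s) - T0p (snd (snd (X s))))^2
      - (fst (snd (X s)) - T2p (snd (snd (X s))))^2)"
    by (simp add: Wf_def zz_def uu_def vv_def)
  show "((\<lambda>s. Vf e (X s)) has_real_derivative DV R eps e (X t)) (at t within I)"
    unfolding V
    apply (rule derivative_eq_intros hA hB hC hT0 hT2 refl)+
    using R by (simp add: Xt D DV_def zz_def uu_def vv_def ww_def algebra_simps power2_eq_square) (auto simp: divide_simps algebra_simps)
  show "((\<lambda>s. Wf e (X s)) has_real_derivative DW R eps e (X t)) (at t within I)"
    unfolding W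
    apply (rule derivative_eq_intros hA hB hC hT0 hT2 refl)+
    using R by (simp add: Xt D DW_def zz_def uu_def vv_def ww_def algebra_simps power2_eq_square) (auto simp: divide_simps algebra_simps)
qed

definition Kc :: real where "Kc = (1 + 600 * 100)^2 / (2 * 10) + 600"

lemma eps_facts:
  assumes R: "R > 0" and e: "0 < eps" "eps < 1 / (10^9 * R)"
  shows "eps * Kc \<le> (1.9/R) / 4" "eps * 10 \<le> 1.9/R"
proof -
  have K0: "Kc \<ge> 0" by (simp add: Kc_def)
  have "eps * Kc \<le> (1 / (10^9 * R)) * Kc" using e K0 by (intro mult_right_mono) auto
  also have "\<dots> = (Kc / 10^9) / R" by simp
  also have "\<dots> \<le> (1.9/4) / R" using R by (intro divide_right_mono) (auto simp: Kc_def)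
  finally show "eps * Kc \<le> (1.9/R) / 4" by simp
  have "eps * 10 \<le> (1 / (10^9 * R)) * 10" using e by (intro mult_right_mono) auto
  also have "\<dots> = (10 / 10^9) / R" by simp
  also have "\<dots> \<le> 1.9 / R" using R by (intro divide_right_mono) auto
  finally show "eps * 10 \<le> 1.9/R" .
qed

lemma DV_le:
  assumes R: "R > 0" and ep: "0 < eps" "eps < 1 / (10^9 * R)"
    and e: "4/5 \<le> e" "e \<le> 17/20" "hp e = 0" and z: "\<bar>zz e X\<bar> \<le> 1/20"
  shows "DV R eps e X \<le> -(eps * 10) * Vf e X"
proof -
  define x where "x = snd (snd X)"
  have x: "0 \<le> x" "x \<le> 1" using z e unfolding zz_def x_def abs_le_iff by linarith+
  have loc: "(x - e) * hp x \<le> - 10 * (x - e)^2 \<and> \<bar>hp x\<bar> \<le> 100 * \<bar>x - e\<bar>"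
    using local2[OF e, of x] z by (simp add: zz_def x_def)
  have "eps * zz e X * (uu X + vv X * p2 x + hp x) - (1.9/R) * (uu X)^2 - (4/R) * (vv X)^2
     - eps * (uu X + vv X * p2 x + hp x) * (dT0p x * uu X + dT2p x * vv X)
     \<le> -(eps * 10/2) * ((zz e X)^2 + (uu X)^2 + (vv X)^2)"
  proof (rule core_ineq)
    show "zz e X * hp x \<le> - 10 * (zz e X)^2" using loc by (simp add: zz_def x_def)
    show "\<bar>hp x\<bar> \<le> 100 * \<bar>zz e X\<bar>" using loc by (simp add: zz_def x_def)
    show "\<bar>dT0p x\<bar> \<le> 600" using dT0p_bnd x by auto
    show "\<bar>dT2p x\<bar> \<le> 600" using dT2p_bnd x by auto
    show "\<bar>p2 x\<bar> \<le> 1" using p2_bnd x by auto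
    show "Kc = (1 + 600 * 100)^2 / (2 * 10) + 600" by (simp add: Kc_def)
    show "eps * Kc \<le> (1.9/R) / 4" "eps * 10 \<le> 1.9/R" using eps_facts[OF R ep] by auto
  qed (use R ep in auto)
  then show ?thesis by (simp add: DV_def Vf_def ww_def x_def algebra_simps)
qed

lemma DW_ge:
  assumes R: "R > 0" and ep: "0 < eps" "eps < 1 / (10^9 * R)"
    and e: "1/5 \<le> e" "e \<le> 1/4" "hp e = 0" and z: "\<bar>zz e X\<bar> \<le> 1/20"
  shows "DW R eps e X \<ge> (eps * 10) * ((zz e X)^2 + (uu X)^2 + (vv X)^2)"
    and "DW R eps e X \<ge> (eps * 10) * Wf e X"
proof -
  define x where "x = snd (snd X)"
  have x: "0 \<le> x" "x \<le> 1" using z e unfolding zz_def x_def abs_le_iff by linarith+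
  have loc: "(x - e) * hp x \<ge> 10 * (x - e)^2 \<and> \<bar>hp x\<bar> \<le> 100 * \<bar>x - e\<bar>"
    using local1[OF e, of x] z by (simp add: zz_def x_def)
  have "eps * zz e X * (- uu X + (- vv X) * p2 x + (- hp x)) - (1.9/R) * (- uu X)^2 - (4/R) * (- vv X)^2
     - eps * (- uu X + (- vv X) * p2 x + (- hp x)) * (dT0p x * (- uu X) + dT2p x * (- vv X))
     \<le> -(eps * 10/2) * ((zz e X)^2 + (- uu X)^2 + (- vv X)^2)"
  proof (rule core_ineq)
    show "zz e X * (- hp x) \<le> - 10 * (zz e X)^2" using loc by (simp add: zz_def x_def)
    show "\<bar>- hp x\<bar> \<le> 100 * \<bar>zz e X\<bar>" using loc by (simp add: zz_def x_def)
    show "\<bar>dT0p x\<bar> \<le> 600" using dT0p_bnd x by auto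
    show "\<bar>dT2p x\<bar> \<le> 600" using dT2p_bnd x by auto
    show "\<bar>p2 x\<bar> \<le> 1" using p2_bnd x by auto
    show "Kc = (1 + 600 * 100)^2 / (2 * 10) + 600" by (simp add: Kc_def)
    show "eps * Kc \<le> (1.9/R) / 4" "eps * 10 \<le> 1.9/R" using eps_facts[OF R ep] by auto
  qed (use R ep in auto)
  then show 1: "DW R eps e X \<ge> (eps * 10) * ((zz e X)^2 + (uu X)^2 + (vv X)^2)"
    by (simp add: DW_def ww_def x_def algebra_simps)
  have "Wf e X \<le> (zz e X)^2 + (uu X)^2 + (vv X)^2" by (simp add: Wf_def)
  then have "(eps * 10) * Wf e X \<le> (eps * 10) * ((zz e X)^2 + (uu X)^2 + (vv X)^2)"
    using ep by (intro mult_left_mono) auto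
  then show "DW R eps e X \<ge> (eps * 10) * Wf e X" using 1 by linarith
qed


lemma deriv_at_interior:
  assumes "(g has_real_derivative D) (at s within I)" "{0<..<t} \<subseteq> I" "0 < s" "s < t"
  shows "(g has_real_derivative D) (at s)"
proof -
  have "(g has_real_derivative D) (at s within {0<..<t})" by (rule DERIV_subset[OF assms(1,2)])
  moreover have "at s within {0<..<t} = at s" by (rule at_within_open) (use assms(3,4) in auto)
  ultimately show ?thesis by simp
qed

lemma decay:
  fixes g g' :: "real \<Rightarrow> real"
  assumes t: "0 \<le> t" and d: "\<And>s. s \<in> {0..t} \<Longrightarrow> (g has_real_derivative g' s) (at s within I)"
    and sub: "{0..t} \<subseteq> I" and le: "\<And>s. 0 < s \<Longrightarrow> s < t \<Longrightarrow> g' s \<le> -k * g s"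
  shows "g t \<le> g 0 * exp (-k * t)"
proof -
  define h where "h s = g s * exp (k * s)" for s
  have dt: "(g has_real_derivative g' s) (at s within {0..t})" if "s \<in> {0..t}" for s
    using DERIV_subset[OF d[OF that] sub] .
  have cg: "continuous_on {0..t} g" by (rule DERIV_continuous_on[OF dt])
  have cont: "continuous_on {0..t} h" unfolding h_def
    by (intro continuous_on_mult cg continuous_on_exp continuous_on_mult continuous_on_const continuous_on_id)
  have "h t \<le> h 0"
  proof (rule DERIV_nonpos_imp_decreasing_open[OF t _ cont])
    fix s assume s: "0 < s" "s < t"
    have "{0<..<t} \<subseteq> I" using sub by auto
    then have gd: "(g has_real_derivative g' s) (at s)"
      using deriv_at_interior[OF d[of s], of t] s by auto
    have ed: "((\<lambda>s. exp (k * s)) has_real_derivative exp (k * s) * k) (at s)"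
      by (auto intro!: derivative_eq_intros)
    have "(h has_real_derivative (g' s * exp (k * s) + exp (k * s) * k * g s)) (at s)"
      unfolding h_def[abs_def] by (rule DERIV_mult[OF gd ed])
    moreover have "g' s * exp (k * s) + exp (k * s) * k * g s = (g' s + k * g s) * exp (k * s)"
      by (simp add: algebra_simps)
    moreover have "(g' s + k * g s) * exp (k * s) \<le> 0" using le[OF s]
      by (intro mult_nonpos_nonneg) auto
    ultimately show "\<exists>y. (h has_real_derivative y) (at s) \<and> y \<le> 0" by auto
  qed
  then have "g t * exp (k * t) \<le> g 0" by (simp add: h_def)
  then have "g t * exp (k * t) * exp (-k * t) \<le> g 0 * exp (-k * t)" by (intro mult_right_mono) auto
  then show ?thesis by (simp add: mult.assoc exp_add[symmetric])
qed

lemma growth: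
  fixes g g' :: "real \<Rightarrow> real"
  assumes t: "0 \<le> t" and d: "\<And>s. s \<in> {0..t} \<Longrightarrow> (g has_real_derivative g' s) (at s within I)"
    and sub: "{0..t} \<subseteq> I" and ge: "\<And>s. 0 < s \<Longrightarrow> s < t \<Longrightarrow> g' s \<ge> k * g s"
  shows "g t \<ge> g 0 * exp (k * t)"
proof -
  have "(- g) t \<le> (- g) 0 * exp (- (-k) * t)"
  proof (rule decay[OF t _ sub])
    fix s assume "s \<in> {0..t}"
    then show "((- g) has_real_derivative (- g' s)) (at s within I)"
      using d unfolding fun_Compl_def by (auto intro!: derivative_eq_intros)
  next
    fix s assume "0 < s" "s < t"
    then show "- g' s \<le> - (-k) * (- g) s" using ge by simp
  qed
  then show ?thesis by simp
qed

lemma first_exit: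
  fixes g :: "real \<Rightarrow> real"
  assumes cont: "continuous_on {0..t} g" and g0: "g 0 < c" and ex: "sx \<in> {0..t}" "c \<le> g sx"
  obtains s1 where "0 < s1" "s1 \<le> t" "c \<le> g s1" "\<And>s. 0 \<le> s \<Longrightarrow> s < s1 \<Longrightarrow> g s < c"
proof -
  define B where "B = {0..t} \<inter> g -` {c..}"
  have cB: "closed B" unfolding B_def by (rule continuous_closed_preimage[OF cont]) auto
  have ne: "B \<noteq> {}" using ex by (auto simp: B_def)
  have bb: "bdd_below B" by (auto simp: B_def bdd_below_def)
  define s1 where "s1 = Inf B"
  have s1B: "s1 \<in> B" unfolding s1_def by (rule closed_contains_Inf[OF ne bb cB])
  have below: "g s < c" if "0 \<le> s" "s < s1" for s
  proof (rule ccontr)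
    assume "\<not> g s < c"
    then have "s \<in> B" using that s1B by (auto simp: B_def)
    then have "s1 \<le> s" unfolding s1_def by (rule cInf_lower[OF _ bb])
    then show False using that by simp
  qed
  have "s1 \<noteq> 0" using s1B g0 by (auto simp: B_def)
  then have "0 < s1" using s1B by (auto simp: B_def)
  then show ?thesis using that[of s1] s1B below by (auto simp: B_def)
qed


lemma dist3: "(dist X Y)^2 = (fst X - fst Y)^2 + (fst (snd X) - fst (snd Y))^2 + (snd (snd X) - snd (snd Y))^2"
  for X Y :: "real \<times> real \<times> real"
  by (cases X; cases Y) (simp add: dist_Pair_Pair dist_real_def)

lemma norm3: "(norm X)^2 = (fst X)^2 + (fst (snd X))^2 + (snd (snd X))^2"
  for X :: "real \<times> real \<times> real"
  using dist3[of X 0] by (simp add: dist_norm)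

lemma sq_add_le: "(a + b)^2 \<le> 2 * a^2 + 2 * (b::real)^2"
proof -
  have "0 \<le> (a - b)^2" by simp
  then show ?thesis by (simp add: power2_eq_square algebra_simps)
qed

lemma abs_sq_le: "\<bar>b\<bar> \<le> K * \<bar>z\<bar> \<Longrightarrow> (b::real)^2 \<le> K^2 * z^2"
proof -
  assume h: "\<bar>b\<bar> \<le> K * \<bar>z\<bar>"
  have "\<bar>b\<bar>^2 \<le> (K * \<bar>z\<bar>)^2" by (rule power_mono[OF h]) simp
  then show ?thesis by (simp add: power_mult_distrib)
qed

definition Kd :: real where "Kd = 1444804"

lemma lin_aux: "P \<le> 2 * u2 + 2 * A \<Longrightarrow> Q \<le> 2 * v2 + 2 * B \<Longrightarrow> A \<le> 360000 * z2 \<Longrightarrow> B \<le> 360000 * z2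
  \<Longrightarrow> 0 \<le> z2 \<Longrightarrow> 0 \<le> u2 \<Longrightarrow> 0 \<le> v2 \<Longrightarrow> P + Q + z2 \<le> 1444804 * (z2 + u2 + v2)" for P Q A B u2 v2 z2 :: real
  by (simp add: algebra_simps)
lemma lin_aux3: "U \<le> 2 * a2 + 2 * C1 \<Longrightarrow> V \<le> 2 * b2 + 2 * C2 \<Longrightarrow> C1 \<le> 360000 * z2 \<Longrightarrow> C2 \<le> 360000 * z2
  \<Longrightarrow> 0 \<le> z2 \<Longrightarrow> 0 \<le> a2 \<Longrightarrow> 0 \<le> b2 \<Longrightarrow> z2 + U + V \<le> 1444804 * (a2 + b2 + z2)" for U V C1 C2 a2 b2 z2 :: real
  by (simp add: algebra_simps)

lemma dist_V:
  assumes e: "1/5 \<le> e" "e \<le> 17/20" and z: "\<bar>zz e X\<bar> \<le> 1/20"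
  shows "(dist X (T0p e, T2p e, e))^2 \<le> Kd * Vf e X" "Vf e X \<le> Kd * (dist X (T0p e, T2p e, e))^2"
    "\<bar>zz e X\<bar> \<le> dist X (T0p e, T2p e, e)"
proof -
  define x where "x = snd (snd X)"
  have x: "0 \<le> x" "x \<le> 1" using z e unfolding zz_def x_def abs_le_iff by linarith+
  have e01: "0 \<le> e" "e \<le> 1" using e by auto
  have l0: "(T0p x - T0p e)^2 \<le> 600^2 * (zz e X)^2"
    by (rule abs_sq_le) (use T0p_lip[OF x e01] in \<open>simp add: zz_def x_def\<close>)
  have l2: "(T2p x - T2p e)^2 \<le> 600^2 * (zz e X)^2"
    by (rule abs_sq_le) (use T2p_lip[OF x e01] in \<open>simp add: zz_def x_def\<close>)
  have D: "(dist X (T0p e, T2p e, e))^2 = (fst X - T0p e)^2 + (fst (snd X) - T2p e)^2 + (zz e X)^2"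
    by (simp add: dist3 zz_def)
  have a1: "fst X - T0p e = uu X + (T0p x - T0p e)" by (simp add: uu_def x_def)
  have a2: "fst (snd X) - T2p e = vv X + (T2p x - T2p e)" by (simp add: vv_def x_def)
  have b1: "uu X = (fst X - T0p e) - (T0p x - T0p e)" by (simp add: uu_def x_def)
  have b2: "vv X = (fst (snd X) - T2p e) - (T2p x - T2p e)" by (simp add: vv_def x_def)
  have z2: "0 \<le> (zz e X)^2" "0 \<le> (uu X)^2" "0 \<le> (vv X)^2" by simp_all
  show "(dist X (T0p e, T2p e, e))^2 \<le> Kd * Vf e X"
    unfolding D a1 a2 Vf_def Kd_def
    by (rule lin_aux[OF sq_add_le[of "uu X" "T0p x - T0p e"] sq_add_le[of "vv X" "T2p x - T2p e"]])
      (use l0 l2 z2 in auto)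
  show "Vf e X \<le> Kd * (dist X (T0p e, T2p e, e))^2"
  proof -
    have u2: "(uu X)^2 \<le> 2 * (fst X - T0p e)^2 + 2 * (T0p x - T0p e)^2"
      using sq_add_le[of "fst X - T0p e" "- (T0p x - T0p e)"] b1 power2_commute[of "T0p e" "T0p x"] by simp
    have v2: "(vv X)^2 \<le> 2 * (fst (snd X) - T2p e)^2 + 2 * (T2p x - T2p e)^2"
      using sq_add_le[of "fst (snd X) - T2p e" "- (T2p x - T2p e)"] b2 power2_commute[of "T2p e" "T2p x"] by simp
    show ?thesis unfolding D Vf_def Kd_def
      by (rule lin_aux3[OF u2 v2]) (use l0 l2 in auto)
  qed
  have "(zz e X)^2 \<le> (dist X (T0p e, T2p e, e))^2" using D by simp
  then show "\<bar>zz e X\<bar> \<le> dist X (T0p e, T2p e, e)"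
    using power2_le_imp_le[of "\<bar>zz e X\<bar>" "dist X (T0p e, T2p e, e)"] by simp
qed


lemma sol_derivs:
  assumes R: "R > 0" and sol: "is_solution_on (F R eps) X I" and s: "s \<in> I"
  shows "((\<lambda>s. Vf e (X s)) has_real_derivative DV R eps e (X s)) (at s within I)"
    "((\<lambda>s. Wf e (X s)) has_real_derivative DW R eps e (X s)) (at s within I)"
  using comp_derivs[of R X eps s I e] R sol s by (auto simp: is_solution_on_def)

lemma V_bound:
  assumes R: "R > 0" and ep: "0 < eps" "eps < 1 / (10^9 * R)"
    and e: "4/5 \<le> e" "e \<le> 17/20" "hp e = 0"
    and sol: "is_solution_on (F R eps) X I" and sub: "{0..t} \<subseteq> I" and t: "0 \<le> t"
    and V0: "Vf e (X 0) < (1/20)^2"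
  shows "Vf e (X t) \<le> Vf e (X 0) * exp (-(eps * 10) * t)"
proof -
  define g where "g s = Vf e (X s)" for s
  have d: "(g has_real_derivative DV R eps e (X s)) (at s within I)" if "s \<in> {0..t}" for s
    unfolding g_def[abs_def] using sol_derivs(1)[OF R sol] that sub by auto
  have g0: "0 \<le> g 0" by (simp add: g_def Vf_def)
  have zsmall: "\<bar>zz e (X s)\<bar> \<le> 1/20" if "g s < (1/20)^2" for s
  proof -
    have "(zz e (X s))^2 \<le> g s" by (simp add: g_def Vf_def)
    then have "\<bar>zz e (X s)\<bar>^2 \<le> (1/20)^2" using that by simp
    then show ?thesis by (rule power2_le_imp_le) simp
  qed
  have inside: "g s < (1/20)^2" if s: "s \<in> {0..t}" for s
  proof (rule ccontr)
    assume "\<not> g s < (1/20)^2"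
    then have ge: "(1/20)^2 \<le> g s" by simp
    have cont: "continuous_on {0..t} g" by (rule DERIV_continuous_on[OF DERIV_subset[OF d sub]])
    obtain s1 where s1: "0 < s1" "s1 \<le> t" "(1/20)^2 \<le> g s1" and bel: "\<And>s. 0 \<le> s \<Longrightarrow> s < s1 \<Longrightarrow> g s < (1/20)^2"
      using first_exit[OF cont _ s ge] V0 g_def by auto
    have "g s1 \<le> g 0 * exp (-(eps * 10) * s1)"
    proof (rule decay[of s1 g "\<lambda>s. DV R eps e (X s)" I])
      show "0 \<le> s1" using s1 by simp
      show "{0..s1} \<subseteq> I" using s1 sub by auto
      show "(g has_real_derivative DV R eps e (X s)) (at s within I)" if "s \<in> {0..s1}" for s
        using d[of s] that s1 by auto
      show "DV R eps e (X s) \<le> - (eps * 10) * g s" if "0 < s" "s < s1" for s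
        unfolding g_def by (rule DV_le[OF R ep e zsmall]) (use bel that in \<open>auto simp: g_def\<close>)
    qed
    also have "\<dots> \<le> g 0" using g0 s1 ep by (intro mult_left_le) auto
    finally show False using V0 s1 by (simp add: g_def)
  qed
  have "g t \<le> g 0 * exp (-(eps * 10) * t)"
  proof (rule decay[of t g "\<lambda>s. DV R eps e (X s)" I])
    show "0 \<le> t" by (rule t)
    show "{0..t} \<subseteq> I" by (rule sub)
    show "(g has_real_derivative DV R eps e (X s)) (at s within I)" if "s \<in> {0..t}" for s
      using d that by auto
    show "DV R eps e (X s) \<le> - (eps * 10) * g s" if "0 < s" "s < t" for s
      unfolding g_def by (rule DV_le[OF R ep e zsmall]) (use inside that in \<open>auto simp: g_def\<close>)
  qed
  then show ?thesis by (simp add: g_def)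
qed


lemma stable_start:
  assumes e: "4/5 \<le> e" "e \<le> 17/20" and d: "dist X (T0p e, T2p e, e) < 1/24040"
  shows "Vf e X < (1/20)^2" "Vf e X \<le> Kd * (dist X (T0p e, T2p e, e))^2"
proof -
  have z: "\<bar>zz e X\<bar> \<le> 1/20"
  proof -
    have "(zz e X)^2 \<le> (dist X (T0p e, T2p e, e))^2" by (simp add: dist3 zz_def)
    then have "\<bar>zz e X\<bar> \<le> dist X (T0p e, T2p e, e)"
      using power2_le_imp_le[of "\<bar>zz e X\<bar>" "dist X (T0p e, T2p e, e)"] by simp
    then show ?thesis using d by simp
  qed
  show V: "Vf e X \<le> Kd * (dist X (T0p e, T2p e, e))^2" using dist_V(2)[of e X] e z by simp
  have "(dist X (T0p e, T2p e, e))^2 < (1/24040)^2" using d by (intro power_strict_mono) auto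
  then have "Kd * (dist X (T0p e, T2p e, e))^2 < Kd * (1/24040)^2" by (intro mult_strict_left_mono) (auto simp: Kd_def)
  moreover have "Kd * (1/24040)^2 = (1/20)^2" by (simp add: Kd_def power2_eq_square)
  ultimately show "Vf e X < (1/20)^2" using V by linarith
qed

lemma dist_from_V:
  assumes e: "4/5 \<le> e" "e \<le> 17/20" and V: "Vf e X < (1/20)^2"
  shows "(dist X (T0p e, T2p e, e))^2 \<le> Kd * Vf e X"
proof -
  have "(zz e X)^2 \<le> Vf e X" by (simp add: Vf_def)
  then have "\<bar>zz e X\<bar>^2 \<le> (1/20)^2" using V by simp
  then have "\<bar>zz e X\<bar> \<le> 1/20" by (rule power2_le_imp_le) simp
  then show ?thesis using dist_V(1)[of e X] e by simp
qed

lemma stable_main: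
  assumes R: "R > 0" and ep: "0 < eps" "eps < 1 / (10^9 * R)"
    and e: "4/5 \<le> e" "e \<le> 17/20" "hp e = 0"
  shows "asymp_stable (F R eps) (T0p e, T2p e, e)"
proof -
  define p where "p = (T0p e, T2p e, e)"
  have Kd: "Kd > 0" by (simp add: Kd_def)
  have "lyap_stable (F R eps) p"
    unfolding lyap_stable_def
  proof (intro allI impI)
    fix r :: real assume r: "r > 0"
    define d where "d = min (1/24040) (r / Kd)"
    have d0: "d > 0" using r Kd by (simp add: d_def)
    show "\<exists>d>0. \<forall>x b. 0 < b \<longrightarrow> is_solution_on (F R eps) x {0..<b} \<longrightarrow> dist (x 0) p < d
        \<longrightarrow> (\<forall>t\<in>{0..<b}. dist (x t) p < r)"
    proof (intro exI[of _ d] conjI allI impI ballI d0)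
      fix x b t assume b: "0 < b" and sol: "is_solution_on (F R eps) x {0..<b}"
        and x0: "dist (x 0) p < d" and t: "t \<in> {0..<b}"
      have x0': "dist (x 0) p < 1/24040" using x0 by (simp add: d_def)
      have V0: "Vf e (x 0) < (1/20)^2" "Vf e (x 0) \<le> Kd * (dist (x 0) p)^2"
        using stable_start[OF e(1,2) x0'[unfolded p_def]] by (auto simp: p_def)
      have Vt: "Vf e (x t) \<le> Vf e (x 0) * exp (-(eps * 10) * t)"
        by (rule V_bound[OF R ep e sol _ _ V0(1)]) (use t in auto)
      have "exp (-(eps * 10) * t) \<le> 1" using ep t by auto
      moreover have "0 \<le> Vf e (x 0)" by (simp add: Vf_def)
      ultimately have Vt': "Vf e (x t) \<le> Vf e (x 0)" using Vt by (meson mult_left_le order_trans)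
      then have "Vf e (x t) < (1/20)^2" using V0 by simp
      then have "(dist (x t) p)^2 \<le> Kd * Vf e (x t)" using dist_from_V[OF e(1,2)] by (simp add: p_def)
      also have "\<dots> \<le> Kd * (Kd * (dist (x 0) p)^2)" using Vt' V0 Kd by (intro mult_left_mono) auto
      also have "\<dots> = (Kd * dist (x 0) p)^2" by (simp add: power2_eq_square)
      finally have "dist (x t) p \<le> Kd * dist (x 0) p"
        using power2_le_imp_le[of "dist (x t) p"] Kd by simp
      also have "\<dots> < Kd * (r / Kd)" using x0 Kd by (intro mult_strict_left_mono) (auto simp: d_def)
      finally show "dist (x t) p < r" using Kd by simp
    qed
  qed
  moreover have "\<exists>d>0. \<forall>x. is_solution_on (F R eps) x {0..} \<longrightarrow> dist (x 0) p < d \<longrightarrow> (x \<longlongrightarrow> p) at_top"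
  proof (intro exI[of _ "1/24040"] conjI allI impI)
    fix x assume sol: "is_solution_on (F R eps) x {0..}" and x0: "dist (x 0) p < 1/24040"
    have V0: "Vf e (x 0) < (1/20)^2" using stable_start[OF e(1,2) x0[unfolded p_def]] by (auto simp: p_def)
    define C where "C = Kd * Vf e (x 0)"
    have C0: "0 \<le> C" using Kd by (simp add: C_def Vf_def)
    have bnd: "dist (x t) p \<le> sqrt (C * exp (-(eps * 10) * t))" if t: "0 \<le> t" for t
    proof -
      have Vt: "Vf e (x t) \<le> Vf e (x 0) * exp (-(eps * 10) * t)"
        by (rule V_bound[OF R ep e sol _ t V0]) auto
      have "exp (-(eps * 10) * t) \<le> 1" using ep t by auto
      moreover have "0 \<le> Vf e (x 0)" by (simp add: Vf_def)
      ultimately have "Vf e (x t) \<le> Vf e (x 0)" using Vt by (meson mult_left_le order_trans)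
      then have "Vf e (x t) < (1/20)^2" using V0 by simp
      then have "(dist (x t) p)^2 \<le> Kd * Vf e (x t)" using dist_from_V[OF e(1,2)] by (simp add: p_def)
      also have "\<dots> \<le> Kd * (Vf e (x 0) * exp (-(eps * 10) * t))" using Vt Kd by (intro mult_left_mono) auto
      also have "\<dots> = C * exp (-(eps * 10) * t)" by (simp add: C_def mult.assoc)
      finally show ?thesis by (rule real_le_rsqrt)
    qed
    have lim0: "((\<lambda>t. sqrt (C * exp (-(eps * 10) * t))) \<longlongrightarrow> 0) at_top"
    proof -
      have k: "eps * 10 > 0" using ep by simp
      have "filterlim (\<lambda>t. -(eps * 10) * t) at_bot at_top"
        by (rule filterlim_tendsto_neg_mult_at_bot[OF tendsto_const _ filterlim_ident]) (use k in simp)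
      then have "((\<lambda>t. exp (-(eps * 10) * t)) \<longlongrightarrow> 0) at_top"
        by (rule filterlim_compose[OF exp_at_bot])
      then have "((\<lambda>t. C * exp (-(eps * 10) * t)) \<longlongrightarrow> C * 0) at_top" by (intro tendsto_mult tendsto_const)
      then have "((\<lambda>t. sqrt (C * exp (-(eps * 10) * t))) \<longlongrightarrow> sqrt (C * 0)) at_top" by (rule tendsto_real_sqrt)
      then show ?thesis by simp
    qed
    have "((\<lambda>t. dist (x t) p) \<longlongrightarrow> 0) at_top"
    proof (rule tendsto_sandwich[OF _ _ tendsto_const lim0])
      show "\<forall>\<^sub>F t in at_top. 0 \<le> dist (x t) p" by simp
      show "\<forall>\<^sub>F t in at_top. dist (x t) p \<le> sqrt (C * exp (- (eps * 10) * t))"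
        by (rule eventually_mono[OF eventually_ge_at_top[of 0]]) (rule bnd)
    qed
    then show "(x \<longlongrightarrow> p) at_top" by (rule tendsto_dist_iff[THEN iffD2])
  qed simp
  ultimately show ?thesis unfolding asymp_stable_def p_def by blast
qed



definition cl :: "real \<Rightarrow> real \<Rightarrow> real \<Rightarrow> real" where "cl lo hi x = max lo (min hi x)"
lemma cl_lip: "lo \<le> hi \<Longrightarrow> \<bar>cl lo hi x - cl lo hi y\<bar> \<le> \<bar>x - y\<bar>"
  unfolding cl_def max_def min_def by (simp add: abs_if split: if_splits)
lemma cl_in: "lo \<le> hi \<Longrightarrow> lo \<le> cl lo hi x \<and> cl lo hi x \<le> hi"
  by (simp add: cl_def)
lemma cl_id: "lo \<le> x \<Longrightarrow> x \<le> hi \<Longrightarrow> cl lo hi x = x"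
  by (simp add: cl_def)

definition Pi3 :: "real \<Rightarrow> real \<times> real \<times> real \<Rightarrow> real \<times> real \<times> real" where
  "Pi3 e X = (cl (T0p e - 1) (T0p e + 1) (fst X), cl (T2p e - 1) (T2p e + 1) (fst (snd X)),
              cl (e - 1/20) (e + 1/20) (snd (snd X)))"

lemma comp_le: fixes x :: "real \<times> real \<times> real"
  shows "\<bar>fst x\<bar> \<le> norm x" "\<bar>fst (snd x)\<bar> \<le> norm x" "\<bar>snd (snd x)\<bar> \<le> norm x"
proof -
  have n: "(norm x)^2 = (fst x)^2 + (fst (snd x))^2 + (snd (snd x))^2" by (rule norm3)
  have s: "0 \<le> (fst x)^2" "0 \<le> (fst (snd x))^2" "0 \<le> (snd (snd x))^2" by simp_all
  have "\<bar>fst x\<bar>^2 \<le> (norm x)^2" using n s by simp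
  then show "\<bar>fst x\<bar> \<le> norm x" by (rule power2_le_imp_le) simp
  have "\<bar>fst (snd x)\<bar>^2 \<le> (norm x)^2" using n s by simp
  then show "\<bar>fst (snd x)\<bar> \<le> norm x" by (rule power2_le_imp_le) simp
  have "\<bar>snd (snd x)\<bar>^2 \<le> (norm x)^2" using n s by simp
  then show "\<bar>snd (snd x)\<bar> \<le> norm x" by (rule power2_le_imp_le) simp
qed

lemma norm3_le: fixes x :: "real \<times> real \<times> real"
  shows "norm x \<le> \<bar>fst x\<bar> + \<bar>fst (snd x)\<bar> + \<bar>snd (snd x)\<bar>"
proof -
  obtain a b c where x: "x = (a, b, c)" by (cases x) auto
  have 1: "norm (a, b, c) \<le> norm a + norm (b, c)" by (rule norm_Pair_le)
  have 2: "norm (b, c) \<le> norm b + norm c" by (rule norm_Pair_le)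
  from 1 2 have "norm (a, b, c) \<le> \<bar>a\<bar> + \<bar>b\<bar> + \<bar>c\<bar>" by simp
  then show ?thesis using x by simp
qed

lemma in_box: assumes "dist Y (T0p e, T2p e, e) < 1/20" shows "Pi3 e Y = Y"
proof -
  have n: "norm (Y - (T0p e, T2p e, e)) < 1/20" using assms by (simp add: dist_norm)
  have h: "\<bar>fst Y - T0p e\<bar> < 1/20" "\<bar>fst (snd Y) - T2p e\<bar> < 1/20" "\<bar>snd (snd Y) - e\<bar> < 1/20"
    using comp_le[of "Y - (T0p e, T2p e, e)"] n by auto
  have 1: "cl (T0p e - 1) (T0p e + 1) (fst Y) = fst Y" by (rule cl_id) (use h(1) in \<open>unfold abs_less_iff, linarith+\<close>)
  have 2: "cl (T2p e - 1) (T2p e + 1) (fst (snd Y)) = fst (snd Y)" by (rule cl_id) (use h(2) in \<open>unfold abs_less_iff, linarith+\<close>)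
  have 3: "cl (e - 1/20) (e + 1/20) (snd (snd Y)) = snd (snd Y)" by (rule cl_id) (use h(3) in \<open>unfold abs_less_iff, linarith+\<close>)
  show ?thesis unfolding Pi3_def 1 2 3 by simp
qed

definition Lc :: "real \<Rightarrow> real \<Rightarrow> real" where "Lc R eps = (1.9/R + 4/R) * 601 + eps * 2105 + 1"

lemma F_lip:
  assumes R: "R > 0" and ep: "eps > 0" and e: "1/20 \<le> e" "e \<le> 19/20"
  shows "norm (F R eps (Pi3 e X) - F R eps (Pi3 e Y)) \<le> Lc R eps * norm (X - Y)"
proof -
  define N where "N = norm (X - Y)"
  define a where "a = cl (T0p e - 1) (T0p e + 1) (fst X)"
  define b where "b = cl (T2p e - 1) (T2p e + 1) (fst (snd X))"
  define c where "c = cl (e - 1/20) (e + 1/20) (snd (snd X))"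
  define a' where "a' = cl (T0p e - 1) (T0p e + 1) (fst Y)"
  define b' where "b' = cl (T2p e - 1) (T2p e + 1) (fst (snd Y))"
  define c' where "c' = cl (e - 1/20) (e + 1/20) (snd (snd Y))"
  have P: "Pi3 e X = (a, b, c)" "Pi3 e Y = (a', b', c')" by (simp_all add: Pi3_def a_def b_def c_def a'_def b'_def c'_def)
  have da: "\<bar>a - a'\<bar> \<le> N" using cl_lip[of "T0p e - 1" "T0p e + 1" "fst X" "fst Y"] comp_le(1)[of "X - Y"]
    by (simp add: a_def a'_def N_def)
  have db: "\<bar>b - b'\<bar> \<le> N" using cl_lip[of "T2p e - 1" "T2p e + 1" "fst (snd X)" "fst (snd Y)"] comp_le(2)[of "X - Y"]
    by (simp add: b_def b'_def N_def)
  have dc: "\<bar>c - c'\<bar> \<le> N" using cl_lip[of "e - 1/20" "e + 1/20" "snd (snd X)" "snd (snd Y)"] comp_le(3)[of "X - Y"]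
    by (simp add: c_def c'_def N_def)
  have cr: "0 \<le> c" "c \<le> 1" "0 \<le> c'" "c' \<le> 1"
    using cl_in[of "e - 1/20" "e + 1/20" "snd (snd X)"] cl_in[of "e - 1/20" "e + 1/20" "snd (snd Y)"] e
    unfolding c_def c'_def by linarith+
  have e01: "0 \<le> e" "e \<le> 1" using e by auto
  have bb: "\<bar>b'\<bar> \<le> 701" using cl_in[of "T2p e - 1" "T2p e + 1" "fst (snd Y)"] T2p_bnd[OF e01]
    by (simp add: b'_def abs_le_iff)
  have Rn: "R \<noteq> 0" using R by simp
  have D: "F R eps (a, b, c) - F R eps (a', b', c') =
     (-(1.9/R) * ((a - a') - (T0p c - T0p c')), -(4/R) * ((b - b') - (T2p c - T2p c')),
      eps * ((a - a') + (b - b') * p2 c + b' * (p2 c - p2 c')))"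
    using Rn by (simp add: F_eq[OF Rn] hp_def algebra_simps) (simp add: field_simps)
  have t1: "\<bar>-(1.9/R) * ((a - a') - (T0p c - T0p c'))\<bar> \<le> (1.9/R) * (601 * N)"
  proof -
    have "\<bar>(a - a') - (T0p c - T0p c')\<bar> \<le> \<bar>a - a'\<bar> + \<bar>T0p c - T0p c'\<bar>" by (rule abs_triangle_ineq4)
    also have "\<dots> \<le> N + 600 * N" using da T0p_lip[OF cr] dc by (smt (verit))
    finally have h: "\<bar>(a - a') - (T0p c - T0p c')\<bar> \<le> 601 * N" by simp
    have "\<bar>-(1.9/R) * ((a - a') - (T0p c - T0p c'))\<bar> = (1.9/R) * \<bar>(a - a') - (T0p c - T0p c')\<bar>"
      using R by (simp only: abs_mult abs_minus_cancel) (simp add: abs_of_pos)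
    also have "\<dots> \<le> (1.9/R) * (601 * N)" using h R by (intro mult_left_mono) auto
    finally show ?thesis .
  qed
  have t2: "\<bar>-(4/R) * ((b - b') - (T2p c - T2p c'))\<bar> \<le> (4/R) * (601 * N)"
  proof -
    have "\<bar>(b - b') - (T2p c - T2p c')\<bar> \<le> \<bar>b - b'\<bar> + \<bar>T2p c - T2p c'\<bar>" by (rule abs_triangle_ineq4)
    also have "\<dots> \<le> N + 600 * N" using db T2p_lip[OF cr] dc by (smt (verit))
    finally have h: "\<bar>(b - b') - (T2p c - T2p c')\<bar> \<le> 601 * N" by simp
    have "\<bar>-(4/R) * ((b - b') - (T2p c - T2p c'))\<bar> = (4/R) * \<bar>(b - b') - (T2p c - T2p c')\<bar>"
      using R by (simp only: abs_mult abs_minus_cancel) (simp add: abs_of_pos)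
    also have "\<dots> \<le> (4/R) * (601 * N)" using h R by (intro mult_left_mono) auto
    finally show ?thesis .
  qed
  have t3: "\<bar>eps * ((a - a') + (b - b') * p2 c + b' * (p2 c - p2 c'))\<bar> \<le> eps * (2105 * N)"
  proof -
    have "\<bar>(a - a') + (b - b') * p2 c + b' * (p2 c - p2 c')\<bar> \<le> \<bar>a - a'\<bar> + \<bar>b - b'\<bar> * \<bar>p2 c\<bar> + \<bar>b'\<bar> * \<bar>p2 c - p2 c'\<bar>"
      using abs_triangle_ineq[of "(a - a') + (b - b') * p2 c" "b' * (p2 c - p2 c')"]
        abs_triangle_ineq[of "a - a'" "(b - b') * p2 c"] by (simp add: abs_mult)
    also have "\<bar>b - b'\<bar> * \<bar>p2 c\<bar> \<le> N * 1" using db p2_bnd[OF cr(1,2)] by (intro mult_mono) auto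
    also have "\<bar>b'\<bar> * \<bar>p2 c - p2 c'\<bar> \<le> 701 * (3 * N)" using bb p2_lip[OF cr] dc
      by (intro mult_mono) auto
    finally have "\<bar>(a - a') + (b - b') * p2 c + b' * (p2 c - p2 c')\<bar> \<le> 2105 * N" using da by simp
    then show ?thesis using ep by (simp add: abs_mult)
  qed
  have "norm (F R eps (Pi3 e X) - F R eps (Pi3 e Y)) \<le>
      \<bar>-(1.9/R) * ((a - a') - (T0p c - T0p c'))\<bar> + \<bar>-(4/R) * ((b - b') - (T2p c - T2p c'))\<bar>
      + \<bar>eps * ((a - a') + (b - b') * p2 c + b' * (p2 c - p2 c'))\<bar>"
    using norm3_le[of "F R eps (a, b, c) - F R eps (a', b', c')"] unfolding P D by simp
  also have "\<dots> \<le> (1.9/R) * (601 * N) + (4/R) * (601 * N) + eps * (2105 * N)" using t1 t2 t3 by linarith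
  also have "\<dots> \<le> Lc R eps * N" using zero_le_dist[of X Y] by (simp add: Lc_def N_def algebra_simps)
  finally show ?thesis by (simp add: N_def)
qed


lemma zz_le_dist: "\<bar>zz e X\<bar> \<le> dist X (T0p e, T2p e, e)"
proof -
  have "(zz e X)^2 \<le> (dist X (T0p e, T2p e, e))^2" by (simp add: dist3 zz_def)
  then show ?thesis using power2_le_imp_le[of "\<bar>zz e X\<bar>" "dist X (T0p e, T2p e, e)"] by simp
qed

lemma unstable_main:
  assumes R: "R > 0" and ep: "0 < eps" "eps < 1 / (10^9 * R)"
    and e: "1/5 \<le> e" "e \<le> 1/4" "hp e = 0"
  shows "unstable (F R eps) (T0p e, T2p e, e)"
  unfolding unstable_def
proof
  define p where "p = (T0p e, T2p e, e)"
  assume ls: "lyap_stable (F R eps) (T0p e, T2p e, e)"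
  have "\<exists>d>0. \<forall>x b. 0 < b \<longrightarrow> is_solution_on (F R eps) x {0..<b} \<longrightarrow> dist (x 0) p < d
      \<longrightarrow> (\<forall>t\<in>{0..<b}. dist (x t) p < 1/40)"
    using spec[OF ls[unfolded lyap_stable_def], of "1/40"] unfolding p_def by simp
  then obtain d where d: "d > 0" and stab: "\<And>x b. 0 < b \<Longrightarrow> is_solution_on (F R eps) x {0..<b}
      \<Longrightarrow> dist (x 0) p < d \<Longrightarrow> (\<forall>t\<in>{0..<b}. dist (x t) p < 1/40)"
    by blast
  define dd where "dd = min d (1/40)"
  have dd: "0 < dd" "dd \<le> d" "dd \<le> 1/40" using d by (auto simp: dd_def)
  define z0 where "z0 = dd / 2402"
  have z0: "0 < z0" "z0 \<le> 1/96080" using dd by (auto simp: z0_def)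
  define X0 where "X0 = (T0p (e + z0), T2p (e + z0), e + z0)"
  have e01: "0 \<le> e" "e \<le> 1" "0 \<le> e + z0" "e + z0 \<le> 1" using e z0 by auto
  have dX0: "dist X0 p < dd"
  proof -
    have "(dist X0 p)^2 = (T0p (e + z0) - T0p e)^2 + (T2p (e + z0) - T2p e)^2 + z0^2"
      by (simp add: dist3 X0_def p_def)
    also have "\<dots> \<le> 600^2 * z0^2 + 600^2 * z0^2 + z0^2"
      using abs_sq_le[OF T0p_lip[OF e01(3,4,1,2)]] abs_sq_le[OF T2p_lip[OF e01(3,4,1,2)]] by simp
    also have "\<dots> = 720001 * (dd^2 / 5769604)" by (simp add: z0_def power_divide)
    also have "\<dots> < dd^2" using dd by (simp add: field_simps)
    finally have "(dist X0 p)^2 < dd^2" .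
    then show ?thesis by (rule power2_less_imp_less) (use dd in simp)
  qed
  have W0: "Wf e X0 = z0^2" by (simp add: Wf_def X0_def zz_def uu_def vv_def)
  define k where "k = eps * 10"
  have k: "k > 0" using ep by (simp add: k_def)
  define T where "T = (ln ((1/20)^2 / z0^2) + 1) / k"
  have "z0^2 < (1/20)^2" by (rule power_strict_mono) (use z0 in auto)
  then have "1 < (1/20)^2 / z0^2" using z0 by (simp add: field_simps)
  then have lnpos: "ln ((1/20)^2 / z0^2) > 0" by (rule ln_gt_zero)
  have T: "T > 0" using lnpos k by (simp add: T_def)
  have growbig: "z0^2 * exp (k * T) > (1/20)^2"
  proof -
    have "k * T = ln ((1/20)^2 / z0^2) + 1" using k by (simp add: T_def)
    then have "exp (k * T) = ((1/20)^2 / z0^2) * exp 1" using z0 by (simp add: exp_add)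
    then have "z0^2 * exp (k * T) = (1/20)^2 * exp 1" using z0 by simp
    moreover have "exp (1::real) > 1" by simp
    ultimately show ?thesis by simp
  qed
  define G where "G Y = F R eps (Pi3 e Y)" for Y
  have Lp: "Lc R eps > 0" using R ep by (simp add: Lc_def)
  have e20: "1/20 \<le> e" "e \<le> 19/20" using e by auto
  have "\<exists>x. x 0 = X0 \<and> (\<forall>t\<in>{0..T}. (x has_vector_derivative G (x t)) (at t within {0..T}))"
    by (rule picard_exists[OF Lp _ T]) (use F_lip[OF R ep(1) e20] in \<open>simp add: G_def\<close>)
  then obtain X where X0': "X 0 = X0" and der: "\<And>t. t \<in> {0..T} \<Longrightarrow> (X has_vector_derivative G (X t)) (at t within {0..T})"
    by blast
  have contX: "continuous_on {0..T} X"
    using der has_vector_derivative_continuous by (metis continuous_on_eq_continuous_within)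
  define gd where "gd t = dist (X t) p" for t
  have contg: "continuous_on {0..T} gd" unfolding gd_def by (intro continuous_intros contX)
  have g0: "gd 0 < 1/20" using dX0 dd X0' by (simp add: gd_def)
  have GF: "G Y = F R eps Y" if "dist Y p < 1/20" for Y
    using in_box[of Y e] that by (simp add: G_def p_def)
  show False
  proof (cases "\<exists>s\<in>{0..T}. 1/20 \<le> gd s")
    case True
    then obtain sx where sx: "sx \<in> {0..T}" "1/20 \<le> gd sx" by blast
    obtain s1 where s1: "0 < s1" "s1 \<le> T" "1/20 \<le> gd s1" and bel: "\<And>s. 0 \<le> s \<Longrightarrow> s < s1 \<Longrightarrow> gd s < 1/20"
      using first_exit[OF contg g0 sx] by blast
    have sol: "is_solution_on (F R eps) X {0..<s1}"
      unfolding is_solution_on_def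
    proof
      fix t assume t: "t \<in> {0..<s1}"
      have "(X has_vector_derivative G (X t)) (at t within {0..<s1})"
        by (rule has_vector_derivative_within_subset[OF der]) (use t s1 in auto)
      moreover have "G (X t) = F R eps (X t)" using GF bel t by (simp add: gd_def)
      ultimately show "(X has_vector_derivative F R eps (X t)) (at t within {0..<s1})" by simp
    qed
    have small: "\<forall>t\<in>{0..<s1}. dist (X t) p < 1/40"
      using stab[OF s1(1) sol] dX0 dd X0' by simp
    have "s1 \<in> {t \<in> {0..s1}. gd t \<le> 1/40}"
    proof -
      have cl: "closed ({0..s1} \<inter> gd -` {..1/40})"
        by (rule continuous_closed_preimage) (use contg s1 in \<open>auto intro: continuous_on_subset\<close>)
      have "{0..<s1} \<subseteq> {0..s1} \<inter> gd -` {..1/40}" using small by (auto simp: gd_def less_imp_le)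
      then have "closure {0..<s1} \<subseteq> {0..s1} \<inter> gd -` {..1/40}" using cl by (rule closure_minimal)
      moreover have "s1 \<in> closure {0..<s1}" using s1 by simp
      ultimately have "s1 \<in> {0..s1} \<inter> gd -` {..1/40}" by blast
      then show ?thesis by simp
    qed
    then show False using s1 by simp
  next
    case False
    then have inb: "\<And>s. s \<in> {0..T} \<Longrightarrow> gd s < 1/20" by force
    have derF: "(X has_vector_derivative F R eps (X t)) (at t within {0..T})" if "t \<in> {0..T}" for t
      using der[OF that] GF[of "X t"] inb[OF that] by (simp add: gd_def)
    have "Wf e (X T) \<ge> Wf e (X 0) * exp (k * T)"
    proof (rule growth[of T "\<lambda>s. Wf e (X s)" "\<lambda>s. DW R eps e (X s)" "{0..T}"])
      show "0 \<le> T" using T by simp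
      show "{0..T} \<subseteq> {0..T}" by simp
      show "((\<lambda>s. Wf e (X s)) has_real_derivative DW R eps e (X s)) (at s within {0..T})" if "s \<in> {0..T}" for s
        using comp_derivs(2)[OF _ derF[OF that]] R by simp
      show "k * Wf e (X s) \<le> DW R eps e (X s)" if "0 < s" "s < T" for s
      proof -
        have "\<bar>zz e (X s)\<bar> \<le> 1/20" using zz_le_dist[of e "X s"] inb[of s] that by (simp add: gd_def p_def)
        then show ?thesis using DW_ge(2)[OF R ep e] by (simp add: k_def)
      qed
    qed
    then have "Wf e (X T) > (1/20)^2" using growbig W0 X0' by simp
    moreover have "Wf e (X T) \<le> (zz e (X T))^2" by (simp add: Wf_def)
    moreover have "\<bar>zz e (X T)\<bar> < 1/20" using zz_le_dist[of e "X T"] inb[of T] T by (simp add: gd_def p_def)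
    then have "(zz e (X T))^2 < (1/20)^2"
      by (metis abs_ge_zero power2_abs power_strict_mono zero_less_numeral zero_less_power)
    ultimately show False by simp
  qed
qed


lemma equil_iff:
  assumes R: "R > 0" and ep: "eps > 0"
  shows "equilibrium (F R eps) (a, b, c) \<longleftrightarrow> a = T0p c \<and> b = T2p c \<and> hp c = 0"
proof -
  have Rn: "R \<noteq> 0" using R by simp
  have "equilibrium (F R eps) (a, b, c) \<longleftrightarrow>
      (-(1.9/R) * (a - T0p c) = 0 \<and> -(4/R) * (b - T2p c) = 0 \<and> eps * ((a - T0p c) + (b - T2p c) * p2 c + hp c) = 0)"
    unfolding equilibrium_def F_eq[OF Rn] by (simp add: zero_prod_def)
  also have "\<dots> \<longleftrightarrow> a = T0p c \<and> b = T2p c \<and> hp c = 0" using Rn ep by auto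
  finally show ?thesis .
qed


lemma equil_set:
  assumes R: "R > 0" and ep: "eps > 0"
    and e1: "1/5 \<le> e1" "e1 \<le> 1/4" "hp e1 = 0" and e2: "4/5 \<le> e2" "e2 \<le> 17/20" "hp e2 = 0"
  shows "{p. equilibrium (F R eps) p \<and> snd (snd p) \<in> {0..1}} = {(T0p e1, T2p e1, e1), (T0p e2, T2p e2, e2)}"
proof -
  have "p \<in> {p. equilibrium (F R eps) p \<and> snd (snd p) \<in> {0..1}} \<longleftrightarrow>
            p \<in> {(T0p e1, T2p e1, e1), (T0p e2, T2p e2, e2)}" for p :: "real \<times> real \<times> real"
  proof -
    obtain a b c where p: "p = (a, b, c)" by (cases p) auto
    have "p \<in> {p. equilibrium (F R eps) p \<and> snd (snd p) \<in> {0..1}} \<longleftrightarrow>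
          a = T0p c \<and> b = T2p c \<and> hp c = 0 \<and> 0 \<le> c \<and> c \<le> 1"
      using equil_iff[OF R ep] p by auto
    also have "\<dots> \<longleftrightarrow> p \<in> {(T0p e1, T2p e1, e1), (T0p e2, T2p e2, e2)}"
    proof
      assume h: "a = T0p c \<and> b = T2p c \<and> hp c = 0 \<and> 0 \<le> c \<and> c \<le> 1"
      then have "c = e1 \<or> c = e2" using roots_unique[OF e1 e2, of c] by auto
      then show "p \<in> {(T0p e1, T2p e1, e1), (T0p e2, T2p e2, e2)}" using h p by auto
    next
      assume "p \<in> {(T0p e1, T2p e1, e1), (T0p e2, T2p e2, e2)}"
      then show "a = T0p c \<and> b = T2p c \<and> hp c = 0 \<and> 0 \<le> c \<and> c \<le> 1" using p e1 e2 by auto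
    qed
    finally show ?thesis .
  qed
  then show ?thesis by blast
qed

theorem proposition1:
  fixes R :: real
  assumes "R > 0"
  shows "\<exists>eps0>0. \<forall>eps. 0 < eps \<and> eps < eps0 \<longrightarrow>
           (\<exists>p1 p2. {p. equilibrium (F R eps) p \<and> snd (snd p) \<in> {0..1}} = {p1, p2}
              \<and> snd (snd p1) < snd (snd p2)
              \<and> unstable (F R eps) p1
              \<and> asymp_stable (F R eps) p2)"
proof -
  obtain e1 where e1: "1/5 \<le> e1" "e1 \<le> 1/4" "hp e1 = 0" using root1 by blast
  obtain e2 where e2: "4/5 \<le> e2" "e2 \<le> 17/20" "hp e2 = 0" using root2 by blast
  show ?thesis
  proof (intro exI[of _ "1 / (10^9 * R)"] conjI allI impI)
    show "0 < 1 / (10^9 * R)" using assms by simp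
    fix eps :: real assume ep: "0 < eps \<and> eps < 1 / (10^9 * R)"
    have ep1: "0 < eps" "eps < 1 / (10^9 * R)" using ep by auto
    show "\<exists>p1 p2. {p. equilibrium (F R eps) p \<and> snd (snd p) \<in> {0..1}} = {p1, p2}
              \<and> snd (snd p1) < snd (snd p2)
              \<and> unstable (F R eps) p1
              \<and> asymp_stable (F R eps) p2"
    proof (rule exI[of _ "(T0p e1, T2p e1, e1)"], rule exI[of _ "(T0p e2, T2p e2, e2)"], intro conjI)
      show "{p. equilibrium (F R eps) p \<and> snd (snd p) \<in> {0..1}} = {(T0p e1, T2p e1, e1), (T0p e2, T2p e2, e2)}"
        by (rule equil_set[OF assms ep1(1) e1 e2])
      show "snd (snd (T0p e1, T2p e1, e1)) < snd (snd (T0p e2, T2p e2, e2))" using e1 e2 by simp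
      show "unstable (F R eps) (T0p e1, T2p e1, e1)" by (rule unstable_main[OF assms ep1 e1])
      show "asymp_stable (F R eps) (T0p e2, T2p e2, e2)" by (rule stable_main[OF assms ep1 e2])
    qed
  qed
qed

end
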